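(* Let $k \ge 4$ be a fixed integer (independent of $n$). Then \[\mathrm{size}(\mathrm{THR}_n^k) \le \left(4.5-2^{\,2-\lceil \log_2 k\rceil}\right)n+o(n)\,,\] where $o(n)$ denotes a function of $n$ (which may depend on $k$) with $o(n)/n \to 0$ as $n\to\infty$.
   Context: A Boolean straight line program of size $s$ on input variables $x_1,\dots,x_n$ is a sequence of $s$ instructions, each of the form $g \gets h \circ k$ where $\circ$ is an arbitrary binary Boolean operation (any of the 16 functions $\{0,1\}^2\to\{0,1\}$) and each operand is either an input variable or the result of an earlier instruction; designated instructions are outputs, and the program computes a function in the natural way (equivalently, a Boolean circuit with fan-in-two gates over the full binary basis). For a Boolean function $f$, $\mathrm{size}(f)$ is the minimum size of a straight line program computing $f$. The threshold function $\mathrm{THR}_n^k\colon\{0,1\}^n\to\{0,1\}$ is defined by $\mathrm{THR}_n^k(x_1,\dots,x_n)=1$ if $x_1+\dots+x_n\ge k$ and $0$ otherwise. *)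

theory Defs
  imports Complex_Main "HOL-Library.Landau_Symbols"
begin

text \<open>An operand is either an input variable (index i < n) or the result of an earlier
  instruction (index j < position of the current instruction).\<close>

datatype operand = Inp nat | Gate nat

type_synonym instr = "(bool \<Rightarrow> bool \<Rightarrow> bool) \<times> operand \<times> operand"

fun wf_operand :: "nat \<Rightarrow> nat \<Rightarrow> operand \<Rightarrow> bool" where
  "wf_operand n m (Inp i) = (i < n)"
| "wf_operand n m (Gate j) = (j < m)"

definition wf_prog :: "nat \<Rightarrow> instr list \<Rightarrow> bool" where
  "wf_prog n P = (\<forall>j < length P. wf_operand n j (fst (snd (P ! j))) \<and> wf_operand n j (snd (snd (P ! j))))"

fun opval :: "bool list \<Rightarrow> bool list \<Rightarrow> operand \<Rightarrow> bool" where
  "opval xs gs (Inp i) = xs ! i"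
| "opval xs gs (Gate j) = gs ! j"

fun run :: "instr list \<Rightarrow> bool list \<Rightarrow> bool list \<Rightarrow> bool list" where
  "run [] xs gs = gs"
| "run ((f, a, b) # P) xs gs = run P xs (gs @ [f (opval xs gs a) (opval xs gs b)])"

definition computes :: "nat \<Rightarrow> instr list \<Rightarrow> nat \<Rightarrow> (bool list \<Rightarrow> bool) \<Rightarrow> bool" where
  "computes n P j f = (wf_prog n P \<and> j < length P \<and>
      (\<forall>xs. length xs = n \<longrightarrow> run P xs [] ! j = f xs))"

definition slp_size :: "nat \<Rightarrow> (bool list \<Rightarrow> bool) \<Rightarrow> nat" where
  "slp_size n f = (LEAST s. \<exists>P j. length P = s \<and> computes n P j f)"

definition THR :: "nat \<Rightarrow> nat \<Rightarrow> bool list \<Rightarrow> bool" where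
  "THR n k xs = (k \<le> length (filter id xs))"

end

theory Submission
  imports Defs "HOL-Real_Asymp.Real_Asymp"
begin

definition sat :: "bool list \<Rightarrow> bool list \<Rightarrow> nat \<Rightarrow> instr list \<Rightarrow> bool" where
  "sat xs G m B = (\<forall>r<length B. G ! (m+r) = fst (B!r) (opval xs G (fst (snd (B!r)))) (opval xs G (snd (snd (B!r)))))"

definition wfb :: "nat \<Rightarrow> nat \<Rightarrow> instr list \<Rightarrow> bool" where
  "wfb n m B = (\<forall>j<length B. wf_operand n (m+j) (fst (snd (B!j))) \<and> wf_operand n (m+j) (snd (snd (B!j))))"

lemma run_length: "length (run P xs gs) = length gs + length P"
  by (induction P arbitrary: gs) auto

lemma run_prefix: "\<exists>r. run P xs gs = gs @ r"
proof (induction P arbitrary: gs)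
  case Nil then show ?case by simp
next
  case (Cons i P)
  obtain f a b where i: "i = (f,a,b)" by (cases i) auto
  from Cons[of "gs @ [f (opval xs gs a) (opval xs gs b)]"] obtain r where
    "run P xs (gs @ [f (opval xs gs a) (opval xs gs b)]) = gs @ [f (opval xs gs a) (opval xs gs b)] @ r" by auto
  then show ?case by (auto simp: i)
qed

lemma opval_ext: "wf_operand n (length gs) a \<Longrightarrow> opval xs (gs @ r) a = opval xs gs a"
  by (cases a) (auto simp: nth_append)

lemma wf_operand_mono: "wf_operand n m a \<Longrightarrow> m \<le> m' \<Longrightarrow> wf_operand n m' a"
  by (cases a) auto

lemma run_sat_gen:
  assumes "wfb n (length gs) P"
  shows "sat xs (run P xs gs) (length gs) P"
  using assms
proof (induction P arbitrary: gs)
  case Nil then show ?case by (simp add: sat_def)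
next
  case (Cons i P)
  obtain f a b where i: "i = (f,a,b)" by (cases i) auto
  define gs' where "gs' = gs @ [f (opval xs gs a) (opval xs gs b)]"
  have wfa: "wf_operand n (length gs) a" "wf_operand n (length gs) b"
    using Cons.prems by (auto simp: wfb_def i)
  have wfP: "wfb n (length gs') P"
    unfolding wfb_def
  proof (intro allI impI)
    fix j assume "j < length P"
    then have "Suc j < length (i # P)" by simp
    then show "wf_operand n (length gs' + j) (fst (snd (P ! j))) \<and> wf_operand n (length gs' + j) (snd (snd (P ! j)))"
      using Cons.prems[unfolded wfb_def, rule_format, of "Suc j"] by (simp add: gs'_def)
  qed
  have IH: "sat xs (run P xs gs') (length gs') P" using Cons.IH[OF wfP] .
  have R: "run (i # P) xs gs = run P xs gs'" by (simp add: i gs'_def)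
  obtain r where r: "run P xs gs' = gs' @ r" using run_prefix by blast
  show ?case unfolding sat_def
  proof (intro allI impI)
    fix j assume j: "j < length (i # P)"
    show "run (i # P) xs gs ! (length gs + j) = fst ((i # P) ! j) (opval xs (run (i # P) xs gs) (fst (snd ((i # P) ! j))))
          (opval xs (run (i # P) xs gs) (snd (snd ((i # P) ! j))))"
    proof (cases j)
      case 0
      have "opval xs (gs @ ([f (opval xs gs a) (opval xs gs b)] @ r)) a = opval xs gs a"
           "opval xs (gs @ ([f (opval xs gs a) (opval xs gs b)] @ r)) b = opval xs gs b"
        using opval_ext wfa by blast+
      moreover have E: "run (i#P) xs gs = gs @ ([f (opval xs gs a) (opval xs gs b)] @ r)" using R r gs'_def by simp
      ultimately show ?thesis using 0 unfolding E by (simp add: i nth_append)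
    next
      case (Suc j')
      with j IH have "run P xs gs' ! (length gs' + j') = fst (P ! j') (opval xs (run P xs gs') (fst (snd (P ! j'))))
          (opval xs (run P xs gs') (snd (snd (P ! j'))))" by (auto simp: sat_def)
      then show ?thesis using Suc by (simp add: R gs'_def)
    qed
  qed
qed

lemma wf_prog_wfb: "wf_prog n P = wfb n 0 P"
  by (simp add: wf_prog_def wfb_def)

lemma run_sat: "wf_prog n P \<Longrightarrow> sat xs (run P xs []) 0 P"
  using run_sat_gen[of n "[]" P xs] by (simp add: wf_prog_wfb)

lemma all_append: "(\<forall>r<length (A@B). Q r ((A@B)!r)) = ((\<forall>r<length A. Q r (A!r)) \<and> (\<forall>r<length B. Q (length A + r) (B!r)))"
proof (intro iffI conjI allI impI)
  fix r assume H: "\<forall>r<length (A@B). Q r ((A@B)!r)"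
  { assume "r < length A" then show "Q r (A!r)" using H[rule_format, of r] by (simp add: nth_append) }
  { assume "r < length B" then show "Q (length A + r) (B!r)" using H[rule_format, of "length A + r"] by (simp add: nth_append) }
next
  fix r assume H: "(\<forall>r<length A. Q r (A!r)) \<and> (\<forall>r<length B. Q (length A + r) (B!r))" and r: "r < length (A@B)"
  show "Q r ((A@B)!r)"
  proof (cases "r < length A")
    case True then show ?thesis using H by (simp add: nth_append)
  next
    case False
    then obtain r' where r': "r = length A + r'" by (metis le_Suc_ex not_less)
    then show ?thesis using H r by (simp add: nth_append)
  qed
qed

lemma sat_append: "sat xs G m (A @ B) = (sat xs G m A \<and> sat xs G (m + length A) B)"
  unfolding sat_def by (subst all_append) (simp add: add.assoc)

lemma wfb_append: "wfb n m (A @ B) = (wfb n m A \<and> wfb n (m + length A) B)"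
  unfolding wfb_def by (subst all_append) (simp add: add.assoc)

lemma sat_Cons: "sat xs G m ((f,a,b) # B) = (G ! m = f (opval xs G a) (opval xs G b) \<and> sat xs G (Suc m) B)"
  using sat_append[of xs G m "[(f,a,b)]" B] by (simp add: sat_def)

lemma sat_Nil[simp]: "sat xs G m []" by (simp add: sat_def)

lemma wfb_Cons: "wfb n m ((f,a,b) # B) = (wf_operand n m a \<and> wf_operand n m b \<and> wfb n (Suc m) B)"
  using wfb_append[of n m "[(f,a,b)]" B] by (simp add: wfb_def)

lemma wfb_Nil[simp]: "wfb n m []" by (simp add: wfb_def)

lemma concat_uniform_length:
  "(\<And>i. i < K \<Longrightarrow> length (g i) = c) \<Longrightarrow> length (concat (map g [0..<K])) = c * K"
  by (induction K) auto

lemma sat_concat: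
  assumes "\<And>i. i < K \<Longrightarrow> length (g i) = c"
  shows "sat xs G m (concat (map g [0..<K])) = (\<forall>i<K. sat xs G (m + c*i) (g i))"
  using assms
proof (induction K)
  case 0 then show ?case by simp
next
  case (Suc K)
  have "sat xs G m (concat (map g [0..<Suc K])) = (sat xs G m (concat (map g [0..<K])) \<and> sat xs G (m + c*K) (g K))"
    using Suc.prems by (simp add: sat_append concat_uniform_length)
  then show ?case using Suc by (auto simp: less_Suc_eq)
qed

lemma wfb_concat:
  assumes "\<And>i. i < K \<Longrightarrow> length (g i) = c"
  shows "wfb n m (concat (map g [0..<K])) = (\<forall>i<K. wfb n (m + c*i) (g i))"
  using assms
proof (induction K)
  case 0 then show ?case by simp
next
  case (Suc K)
  have "wfb n m (concat (map g [0..<Suc K])) = (wfb n m (concat (map g [0..<K])) \<and> wfb n (m + c*K) (g K))"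
    using Suc.prems by (simp add: wfb_append concat_uniform_length)
  then show ?case using Suc by (auto simp: less_Suc_eq)
qed

definition cb :: "bool \<Rightarrow> nat" where "cb b = (if b then 1 else 0)"
definition cntp :: "bool \<Rightarrow> bool \<Rightarrow> nat" where "cntp a d = (if d then 1 else if a then 2 else 0)"

definition mdfaE :: "nat \<Rightarrow> operand \<Rightarrow> operand \<Rightarrow> operand \<Rightarrow> operand \<Rightarrow> operand \<Rightarrow> instr list" where
"mdfaE m a1 d1 a2 d2 x =
 [(\<lambda>u v. u \<noteq> v, a1, x),
  (\<lambda>u v. u \<or> v, d1, Gate m),
  (\<lambda>u v. u \<noteq> v, d1, x),
  (\<lambda>u v. u = v, a2, Gate (m+2)),
  (\<lambda>u v. u \<or> v, d2, Gate (m+3)),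
  (\<lambda>u v. u = v, Gate (m+2), Gate (m+4)),
  (\<lambda>u v. u = v, Gate (m+1), Gate (m+4)),
  (\<lambda>u v. u \<noteq> v, d2, Gate (m+2))]"

definition mdfaP :: "nat \<Rightarrow> operand \<Rightarrow> operand \<Rightarrow> operand \<Rightarrow> operand \<Rightarrow> operand \<Rightarrow> instr list" where
"mdfaP m a1 d1 a2 d2 x =
 [(\<lambda>u v. u \<and> \<not> v, a2, d2),
  (\<lambda>u v. \<not> (u \<and> v), d2, x),
  (\<lambda>u v. u = v, Gate m, Gate (m+1)),
  (\<lambda>u v. u \<noteq> v, d1, d2),
  (\<lambda>u v. \<not> (u \<and> \<not> v), a1, d1),
  (\<lambda>u v. u \<noteq> v, x, Gate (m+3)),
  (\<lambda>u v. \<not> (u \<and> \<not> v), d1, Gate (m+5)),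
  (\<lambda>u v. u \<noteq> v, Gate (m+4), Gate (m+6))]"

lemma mdfaE_len[simp]: "length (mdfaE m a1 d1 a2 d2 x) = 8" by (simp add: mdfaE_def)
lemma mdfaP_len[simp]: "length (mdfaP m a1 d1 a2 d2 x) = 8" by (simp add: mdfaP_def)

lemma mdfaE_sat:
  assumes "sat xs G m (mdfaE m a1 d1 a2 d2 x)"
  shows "cntp (opval xs G a1) (opval xs G d1) + cntp (opval xs G a2) (opval xs G d2) + cb (opval xs G x)
       = cb (G ! (m+7)) + 2 * cntp (G ! (m+5)) (G ! (m+6))"
proof -
  from assms have
    "G ! m = (opval xs G a1 \<noteq> opval xs G x)"
    "G ! (m+1) = (opval xs G d1 \<or> G ! m)"
    "G ! (m+2) = (opval xs G d1 \<noteq> opval xs G x)"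
    "G ! (m+3) = (opval xs G a2 = G ! (m+2))"
    "G ! (m+4) = (opval xs G d2 \<or> G ! (m+3))"
    "G ! (m+5) = (G ! (m+2) = G ! (m+4))"
    "G ! (m+6) = (G ! (m+1) = G ! (m+4))"
    "G ! (m+7) = (opval xs G d2 \<noteq> G ! (m+2))"
    by (simp_all add: mdfaE_def sat_Cons numeral_eq_Suc)
  then show ?thesis
    by (cases "opval xs G a1"; cases "opval xs G d1"; cases "opval xs G a2"; cases "opval xs G d2"; cases "opval xs G x")
       (simp_all add: cb_def cntp_def)
qed

lemma mdfaP_sat:
  assumes "sat xs G m (mdfaP m a1 d1 a2 d2 x)"
  shows "cntp (opval xs G a1) (opval xs G d1) + cntp (opval xs G a2) (opval xs G d2) + cb (opval xs G x)
       = cb (G ! (m+5)) + 2 * (cb (G ! (m+2)) + cb (G ! (m+7)))"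
proof -
  from assms have
    "G ! m = (opval xs G a2 \<and> \<not> opval xs G d2)"
    "G ! (m+1) = (\<not> (opval xs G d2 \<and> opval xs G x))"
    "G ! (m+2) = (G ! m = G ! (m+1))"
    "G ! (m+3) = (opval xs G d1 \<noteq> opval xs G d2)"
    "G ! (m+4) = (\<not> (opval xs G a1 \<and> \<not> opval xs G d1))"
    "G ! (m+5) = (opval xs G x \<noteq> G ! (m+3))"
    "G ! (m+6) = (\<not> (opval xs G d1 \<and> \<not> G ! (m+5)))"
    "G ! (m+7) = (G ! (m+4) \<noteq> G ! (m+6))"
    by (simp_all add: mdfaP_def sat_Cons numeral_eq_Suc)
  then show ?thesis
    by (cases "opval xs G a1"; cases "opval xs G d1"; cases "opval xs G a2"; cases "opval xs G d2"; cases "opval xs G x")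
       (simp_all add: cb_def cntp_def)
qed

lemma mdfaE_wf:
  assumes "wf_operand n m a1" "wf_operand n m d1" "wf_operand n m a2" "wf_operand n m d2" "wf_operand n m x"
  shows "wfb n m (mdfaE m a1 d1 a2 d2 x)"
  using assms by (simp add: mdfaE_def wfb_Cons wf_operand_mono)

lemma mdfaP_wf:
  assumes "wf_operand n m a1" "wf_operand n m d1" "wf_operand n m a2" "wf_operand n m d2" "wf_operand n m x"
  shows "wfb n m (mdfaP m a1 d1 a2 d2 x)"
  using assms by (simp add: mdfaP_def wfb_Cons wf_operand_mono)

definition pp :: "operand \<Rightarrow> (operand \<times> operand) list \<Rightarrow> nat \<Rightarrow> operand \<times> operand" where
  "pp z ps i = (if i < length ps then ps ! i else (z, z))"

definition ng :: "nat \<Rightarrow> nat" where "ng K = (K + 1) div 2"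

definition carry :: "nat \<Rightarrow> nat \<Rightarrow> operand \<Rightarrow> nat \<Rightarrow> operand" where
  "carry c m z i = (if i = 0 then z else Gate (m + 8*i - c))"

definition chainE :: "nat \<Rightarrow> operand \<Rightarrow> (operand \<times> operand) list \<Rightarrow> instr list" where
  "chainE m z ps = concat (map (\<lambda>i. mdfaE (m + 8*i) (fst (pp z ps (2*i))) (snd (pp z ps (2*i)))
        (fst (pp z ps (2*i+1))) (snd (pp z ps (2*i+1))) (carry 1 m z i)) [0..<ng (length ps)])"

definition chainP :: "nat \<Rightarrow> operand \<Rightarrow> (operand \<times> operand) list \<Rightarrow> instr list" where
  "chainP m z ps = concat (map (\<lambda>i. mdfaP (m + 8*i) (fst (pp z ps (2*i))) (snd (pp z ps (2*i)))
        (fst (pp z ps (2*i+1))) (snd (pp z ps (2*i+1))) (carry 3 m z i)) [0..<ng (length ps)])"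

definition outE :: "nat \<Rightarrow> (operand \<times> operand) list \<Rightarrow> (operand \<times> operand) list" where
  "outE m ps = map (\<lambda>i. (Gate (m + 8*i + 5), Gate (m + 8*i + 6))) [0..<ng (length ps)]"

definition outP :: "nat \<Rightarrow> (operand \<times> operand) list \<Rightarrow> operand list" where
  "outP m ps = concat (map (\<lambda>i. [Gate (m + 8*i + 2), Gate (m + 8*i + 7)]) [0..<ng (length ps)])"

definition bitC :: "nat \<Rightarrow> nat \<Rightarrow> operand \<Rightarrow> (operand \<times> operand) list \<Rightarrow> operand" where
  "bitC c m z ps = carry c m z (ng (length ps))"

definition psum :: "bool list \<Rightarrow> bool list \<Rightarrow> (operand \<times> operand) list \<Rightarrow> nat" where
  "psum xs G ps = (\<Sum>i<length ps. cntp (opval xs G (fst (ps!i))) (opval xs G (snd (ps!i))))"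

definition bsum :: "bool list \<Rightarrow> bool list \<Rightarrow> operand list \<Rightarrow> nat" where
  "bsum xs G ys = (\<Sum>i<length ys. cb (opval xs G (ys!i)))"

lemma chainE_len[simp]: "length (chainE m z ps) = 8 * ng (length ps)"
  unfolding chainE_def by (subst concat_uniform_length[where c=8]) auto

lemma chainP_len[simp]: "length (chainP m z ps) = 8 * ng (length ps)"
  unfolding chainP_def by (subst concat_uniform_length[where c=8]) auto

lemma outE_len[simp]: "length (outE m ps) = ng (length ps)"
  by (simp add: outE_def)

lemma outP_len[simp]: "length (outP m ps) = 2 * ng (length ps)"
  unfolding outP_def by (subst concat_uniform_length[where c=2]) auto

lemma outP_nth:
  assumes "i < ng (length ps)"
  shows "outP m ps ! (2*i) = Gate (m + 8*i + 2)" "outP m ps ! (2*i+1) = Gate (m + 8*i + 7)"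
proof -
  have gen: "\<And>K. i < K \<Longrightarrow> concat (map (\<lambda>i. [Gate (m + 8*i + 2), Gate (m + 8*i + 7)]) [0..<K]) ! (2*i) = Gate (m + 8*i + 2)
      \<and> concat (map (\<lambda>i. [Gate (m + 8*i + 2), Gate (m + 8*i + 7)]) [0..<K]) ! (2*i+1) = Gate (m + 8*i + 7)"
  proof -
    fix K show "i < K \<Longrightarrow> ?thesis K"
    proof (induction K)
      case 0 then show ?case by simp
    next
      case (Suc K)
      have L: "length (concat (map (\<lambda>i. [Gate (m + 8*i + 2), Gate (m + 8*i + 7)]) [0..<K])) = 2*K"
        by (subst concat_uniform_length[where c=2]) auto
      show ?case
      proof (cases "i < K")
        case True then show ?thesis using Suc L by (simp add: nth_append)
      next
        case False then have "i = K" using Suc by simp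
        then show ?thesis using L by (simp add: nth_append)
      qed
    qed
  qed
  show "outP m ps ! (2*i) = Gate (m + 8*i + 2)" "outP m ps ! (2*i+1) = Gate (m + 8*i + 7)"
    using gen[OF assms] by (simp_all add: outP_def)
qed

lemma outP_nth': "i < ng (length ps) \<Longrightarrow> outP m ps ! Suc (2*i) = Gate (m + 8*i + 7)"
  using outP_nth(2) by simp

lemma psum_pad:
  assumes "\<not> opval xs G z" "length ps \<le> N"
  shows "psum xs G ps = (\<Sum>i<N. cntp (opval xs G (fst (pp z ps i))) (opval xs G (snd (pp z ps i))))"
proof -
  have "(\<Sum>i<N. cntp (opval xs G (fst (pp z ps i))) (opval xs G (snd (pp z ps i))))
      = (\<Sum>i<length ps. cntp (opval xs G (fst (pp z ps i))) (opval xs G (snd (pp z ps i))))"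
  proof (rule sum.mono_neutral_right)
    show "\<forall>i\<in>{..<N} - {..<length ps}. cntp (opval xs G (fst (pp z ps i))) (opval xs G (snd (pp z ps i))) = 0"
      using assms by (auto simp: pp_def cntp_def)
  qed (use assms in auto)
  also have "\<dots> = psum xs G ps" unfolding psum_def by (rule sum.cong) (auto simp: pp_def)
  finally show ?thesis by simp
qed

lemma sum_pairs: "(\<Sum>i<2*g. f i) = (\<Sum>j<g. f (2*j) + f (2*j+1))" for f :: "nat \<Rightarrow> nat"
  by (induction g) auto

lemma chainE_sat:
  assumes S: "sat xs G m (chainE m z ps)" and z: "\<not> opval xs G z"
  shows "psum xs G ps = cb (opval xs G (bitC 1 m z ps)) + 2 * psum xs G (outE m ps)"
proof -
  define g where "g = ng (length ps)"
  define cp where "cp i = cntp (opval xs G (fst (pp z ps i))) (opval xs G (snd (pp z ps i)))" for i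
  have Si: "sat xs G (m + 8*i) (mdfaE (m + 8*i) (fst (pp z ps (2*i))) (snd (pp z ps (2*i)))
        (fst (pp z ps (2*i+1))) (snd (pp z ps (2*i+1))) (carry 1 m z i))" if "i < g" for i
    using S that unfolding chainE_def g_def by (subst (asm) sat_concat[where c=8]) auto
  have key: "(\<Sum>j<2*i. cp j) = cb (opval xs G (carry 1 m z i)) + 2 * (\<Sum>j<i. cntp (G ! (m+8*j+5)) (G ! (m+8*j+6)))"
    if "i \<le> g" for i
    using that
  proof (induction i)
    case 0 then show ?case using z by (simp add: carry_def cb_def)
  next
    case (Suc i)
    have E: "cp (2*i) + cp (2*i+1) + cb (opval xs G (carry 1 m z i)) = cb (G ! (m + 8*i + 7)) + 2 * cntp (G ! (m + 8*i + 5)) (G ! (m + 8*i + 6))"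
      using mdfaE_sat[OF Si[of i]] Suc.prems by (simp add: cp_def add.assoc)
    have C: "carry 1 m z (Suc i) = Gate (m + 8*i + 7)" by (simp add: carry_def)
    have "(\<Sum>j<2*Suc i. cp j) = (\<Sum>j<2*i. cp j) + cp (2*i) + cp (2*i+1)" by simp
    also have "\<dots> = cb (G ! (m + 8*i + 7)) + 2 * (\<Sum>j<Suc i. cntp (G ! (m+8*j+5)) (G ! (m+8*j+6)))"
      using Suc.IH Suc.prems E by simp
    finally show ?case using C by simp
  qed
  have "psum xs G ps = (\<Sum>j<2*g. cp j)"
    unfolding cp_def by (rule psum_pad[OF z]) (simp add: g_def ng_def)
  also have "\<dots> = cb (opval xs G (bitC 1 m z ps)) + 2 * (\<Sum>j<g. cntp (G ! (m+8*j+5)) (G ! (m+8*j+6)))"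
    using key[of g] by (simp add: bitC_def g_def)
  also have "(\<Sum>j<g. cntp (G ! (m+8*j+5)) (G ! (m+8*j+6))) = psum xs G (outE m ps)"
    unfolding psum_def g_def by (rule sum.cong) (auto simp: outE_def)
  finally show ?thesis .
qed

lemma chainP_sat:
  assumes S: "sat xs G m (chainP m z ps)" and z: "\<not> opval xs G z"
  shows "psum xs G ps = cb (opval xs G (bitC 3 m z ps)) + 2 * bsum xs G (outP m ps)"
proof -
  define g where "g = ng (length ps)"
  define cp where "cp i = cntp (opval xs G (fst (pp z ps i))) (opval xs G (snd (pp z ps i)))" for i
  have Si: "sat xs G (m + 8*i) (mdfaP (m + 8*i) (fst (pp z ps (2*i))) (snd (pp z ps (2*i)))
        (fst (pp z ps (2*i+1))) (snd (pp z ps (2*i+1))) (carry 3 m z i))" if "i < g" for i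
    using S that unfolding chainP_def g_def by (subst (asm) sat_concat[where c=8]) auto
  define yv where "yv j = cb (G ! (m+8*j+2)) + cb (G ! (m+8*j+7))" for j
  have key: "(\<Sum>j<2*i. cp j) = cb (opval xs G (carry 3 m z i)) + 2 * (\<Sum>j<i. yv j)"
    if "i \<le> g" for i
    using that
  proof (induction i)
    case 0 then show ?case using z by (simp add: carry_def cb_def)
  next
    case (Suc i)
    have E: "cp (2*i) + cp (2*i+1) + cb (opval xs G (carry 3 m z i)) = cb (G ! (m + 8*i + 5)) + 2 * yv i"
      using mdfaP_sat[OF Si[of i]] Suc.prems by (simp add: cp_def yv_def add.assoc)
    have C: "carry 3 m z (Suc i) = Gate (m + 8*i + 5)" by (simp add: carry_def)
    have "(\<Sum>j<2*Suc i. cp j) = (\<Sum>j<2*i. cp j) + cp (2*i) + cp (2*i+1)" by simp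
    also have "\<dots> = cb (G ! (m + 8*i + 5)) + 2 * (\<Sum>j<Suc i. yv j)"
      using Suc.IH Suc.prems E by simp
    finally show ?case using C by simp
  qed
  have "psum xs G ps = (\<Sum>j<2*g. cp j)"
    unfolding cp_def by (rule psum_pad[OF z]) (simp add: g_def ng_def)
  also have "\<dots> = cb (opval xs G (bitC 3 m z ps)) + 2 * (\<Sum>j<g. yv j)"
    using key[of g] by (simp add: bitC_def g_def)
  also have "(\<Sum>j<g. yv j) = bsum xs G (outP m ps)"
  proof -
    have "bsum xs G (outP m ps) = (\<Sum>i<2*g. cb (opval xs G (outP m ps ! i)))"
      by (simp add: bsum_def g_def)
    also have "\<dots> = (\<Sum>j<g. cb (opval xs G (outP m ps ! (2*j))) + cb (opval xs G (outP m ps ! (2*j+1))))"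
      by (rule sum_pairs)
    also have "\<dots> = (\<Sum>j<g. yv j)"
      by (rule sum.cong) (auto simp: outP_nth outP_nth' g_def yv_def)
    finally show ?thesis by simp
  qed
  finally show ?thesis .
qed

definition wfps :: "nat \<Rightarrow> nat \<Rightarrow> (operand \<times> operand) list \<Rightarrow> bool" where
  "wfps n m ps = (\<forall>p\<in>set ps. wf_operand n m (fst p) \<and> wf_operand n m (snd p))"

lemma wfps_mono: "wfps n m ps \<Longrightarrow> m \<le> m' \<Longrightarrow> wfps n m' ps"
  unfolding wfps_def using wf_operand_mono by blast

lemma pp_wf:
  assumes "wfps n m ps" "wf_operand n m z"
  shows "wf_operand n m (fst (pp z ps i))" "wf_operand n m (snd (pp z ps i))"
  using assms by (auto simp: pp_def wfps_def)

lemma chainE_wf: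
  assumes "wfps n m ps" "wf_operand n m z"
  shows "wfb n m (chainE m z ps)"
  unfolding chainE_def
proof (subst wfb_concat[where c=8], simp, intro allI impI)
  fix i assume "i < ng (length ps)"
  have W: "wf_operand n (m + 8*i) q" if "wf_operand n m q" for q
    using wf_operand_mono that by simp
  have c: "wf_operand n (m + 8*i) (carry 1 m z i)"
    using W assms(2) by (auto simp: carry_def)
  have p: "wf_operand n (m+8*i) (fst (pp z ps j))" "wf_operand n (m+8*i) (snd (pp z ps j))" for j
    using W pp_wf assms by auto
  show "wfb n (m + 8*i) (mdfaE (m + 8*i) (fst (pp z ps (2*i))) (snd (pp z ps (2*i)))
        (fst (pp z ps (2*i+1))) (snd (pp z ps (2*i+1))) (carry 1 m z i))"
    by (rule mdfaE_wf[OF p(1) p(2) p(1) p(2) c])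
qed

lemma chainP_wf:
  assumes "wfps n m ps" "wf_operand n m z"
  shows "wfb n m (chainP m z ps)"
  unfolding chainP_def
proof (subst wfb_concat[where c=8], simp, intro allI impI)
  fix i assume "i < ng (length ps)"
  have W: "wf_operand n (m + 8*i) q" if "wf_operand n m q" for q
    using wf_operand_mono that by simp
  have c: "wf_operand n (m + 8*i) (carry 3 m z i)"
    using W assms(2) by (auto simp: carry_def)
  have p: "wf_operand n (m+8*i) (fst (pp z ps j))" "wf_operand n (m+8*i) (snd (pp z ps j))" for j
    using W pp_wf assms by auto
  show "wfb n (m + 8*i) (mdfaP (m + 8*i) (fst (pp z ps (2*i))) (snd (pp z ps (2*i)))
        (fst (pp z ps (2*i+1))) (snd (pp z ps (2*i+1))) (carry 3 m z i))"
    by (rule mdfaP_wf[OF p(1) p(2) p(1) p(2) c])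
qed

lemma outE_wf: "wfps n (m + 8 * ng (length ps)) (outE m ps)"
  by (auto simp: wfps_def outE_def)

lemma outP_wf: "\<forall>y\<in>set (outP m ps). wf_operand n (m + 8 * ng (length ps)) y"
  by (auto simp: outP_def)

lemma bitC_wf: "wf_operand n m z \<Longrightarrow> c \<ge> 1 \<Longrightarrow> wf_operand n (m + 8 * ng (length ps)) (bitC c m z ps)"
  by (auto simp: bitC_def carry_def intro: wf_operand_mono)

fun levelsE :: "nat \<Rightarrow> nat \<Rightarrow> operand \<Rightarrow> (operand \<times> operand) list \<Rightarrow> instr list \<times> operand list \<times> (operand \<times> operand) list" where
  "levelsE 0 m z ps = ([], [], ps)"
| "levelsE (Suc j) m z ps = (let r = levelsE j (m + 8 * ng (length ps)) z (outE m ps) in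
      (chainE m z ps @ fst r, bitC 1 m z ps # fst (snd r), snd (snd r)))"

lemma levelsE_len: "length (fst (snd (levelsE j m z ps))) = j"
  by (induction j arbitrary: m ps) (auto simp: Let_def)

lemma levelsE_plen: "length (fst (levelsE j m z ps)) = (\<Sum>i<j. 8 * (ng ^^ Suc i) (length ps))"
proof (induction j arbitrary: m ps)
  case 0 then show ?case by simp
next
  case (Suc j)
  have "(\<Sum>i<Suc j. 8 * (ng ^^ Suc i) (length ps)) = 8 * ng (length ps) + (\<Sum>i<j. 8 * (ng ^^ Suc i) (ng (length ps)))"
    by (subst sum.lessThan_Suc_shift) (simp add: funpow_swap1)
  then show ?case using Suc by (simp add: Let_def)
qed

lemma levelsE_qlen: "length (snd (snd (levelsE j m z ps))) = (ng ^^ j) (length ps)"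
  by (induction j arbitrary: m ps) (auto simp: Let_def funpow_swap1)

lemma levelsE_wf:
  assumes "wfps n m ps" "wf_operand n m z"
  shows "wfb n m (fst (levelsE j m z ps)) \<and> wfps n (m + length (fst (levelsE j m z ps))) (snd (snd (levelsE j m z ps)))
     \<and> (\<forall>b\<in>set (fst (snd (levelsE j m z ps))). wf_operand n (m + length (fst (levelsE j m z ps))) b)"
  using assms
proof (induction j arbitrary: m ps)
  case 0 then show ?case by simp
next
  case (Suc j)
  define m' where "m' = m + 8 * ng (length ps)"
  have z': "wf_operand n m' z" using Suc.prems wf_operand_mono m'_def by simp
  note IH = Suc.IH[OF outE_wf[of n m ps, folded m'_def] z']
  define r where "r = levelsE j m' z (outE m ps)"
  have b: "wf_operand n m' (bitC 1 m z ps)" using bitC_wf[OF Suc.prems(2)] m'_def by simp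
  have L: "m + length (fst (levelsE (Suc j) m z ps)) = m' + length (fst r)"
    by (simp add: Let_def r_def m'_def)
  show ?case
    using IH chainE_wf[OF Suc.prems] b wf_operand_mono[OF b, of "m' + length (fst r)"]
    unfolding L by (simp add: Let_def r_def[symmetric] m'_def[symmetric] wfb_append)
qed

lemma levelsE_sat:
  assumes "sat xs G m (fst (levelsE j m z ps))" "\<not> opval xs G z"
  shows "psum xs G ps = (\<Sum>i<j. 2^i * cb (opval xs G (fst (snd (levelsE j m z ps)) ! i)))
      + 2^j * psum xs G (snd (snd (levelsE j m z ps)))"
  using assms
proof (induction j arbitrary: m ps)
  case 0 then show ?case by simp
next
  case (Suc j)
  define m' where "m' = m + 8 * ng (length ps)"
  define r where "r = levelsE j m' z (outE m ps)"
  have S1: "sat xs G m (chainE m z ps)" and S2: "sat xs G m' (fst r)"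
    using Suc.prems(1) by (simp_all add: Let_def sat_append r_def m'_def)
  have IH: "psum xs G (outE m ps) = (\<Sum>i<j. 2^i * cb (opval xs G (fst (snd r) ! i))) + 2^j * psum xs G (snd (snd r))"
    using Suc.IH[OF S2[unfolded r_def] Suc.prems(2)] by (simp add: r_def)
  have E: "psum xs G ps = cb (opval xs G (bitC 1 m z ps)) + 2 * psum xs G (outE m ps)"
    by (rule chainE_sat[OF S1 Suc.prems(2)])
  define T where "T = (\<Sum>i<j. 2^i * cb (opval xs G (fst (snd r) ! i)))"
  have SH: "(\<Sum>i<Suc j. 2^i * cb (opval xs G ((bitC 1 m z ps # fst (snd r)) ! i)))
     = cb (opval xs G (bitC 1 m z ps)) + 2 * T"
    unfolding T_def by (simp only: sum.lessThan_Suc_shift) (simp add: sum_distrib_left mult.assoc)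
  have eq1: "fst (snd (levelsE (Suc j) m z ps)) = bitC 1 m z ps # fst (snd r)"
    and eq2: "snd (snd (levelsE (Suc j) m z ps)) = snd (snd r)"
    by (simp_all add: Let_def r_def m'_def)
  have "psum xs G ps = cb (opval xs G (bitC 1 m z ps)) + 2 * T + 2^(Suc j) * psum xs G (snd (snd r))"
    using E IH unfolding T_def by (simp add: algebra_simps)
  then show ?case unfolding eq1 eq2 SH by simp
qed

definition yy :: "operand \<Rightarrow> operand list \<Rightarrow> nat \<Rightarrow> operand" where
  "yy z ys i = (if i < length ys then ys ! i else z)"

definition gridB :: "nat \<Rightarrow> operand \<Rightarrow> nat \<Rightarrow> nat \<Rightarrow> operand list \<Rightarrow> instr list" where
  "gridB m z W R ys = concat (map (\<lambda>i. [(\<lambda>u v. u \<or> v, if i mod W = 0 then z else Gate (m + 2*i - 2), yy z ys i),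
       (\<lambda>u v. u \<or> v, if i < W then z else Gate (m + 2*(i - W) + 1), yy z ys i)]) [0..<R*W])"

lemma gridB_len[simp]: "length (gridB m z W R ys) = 2 * (R * W)"
  unfolding gridB_def by (subst concat_uniform_length[where c=2]) auto

lemma mod_same_le: "j \<le> i \<Longrightarrow> j mod W = i mod W \<Longrightarrow> j \<noteq> i \<Longrightarrow> j + W \<le> (i::nat)"
proof -
  assume a: "j \<le> i" "j mod W = i mod W" "j \<noteq> i"
  have d: "j div W \<le> i div W" using a(1) by (rule div_le_mono)
  have ne: "j div W \<noteq> i div W"
  proof
    assume "j div W = i div W"
    then have "j = i" using a(2) by (metis div_mult_mod_eq)
    with a(3) show False by simp
  qed
  then have "Suc (j div W) \<le> i div W" using d by simp
  then have "Suc (j div W) * W \<le> i div W * W" by (rule mult_le_mono1)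
  moreover have "j div W * W + j mod W = j" "i div W * W + i mod W = i" by (rule div_mult_mod_eq)+
  moreover have "Suc (j div W) * W = j div W * W + W" by simp
  ultimately show ?thesis using a(2) by linarith
qed

lemma gridB_sat:
  assumes S: "sat xs G m (gridB m z W R ys)" and z: "\<not> opval xs G z" and W: "W > 0"
  and i: "i < R * W"
  shows "G ! (m + 2*i) = (\<exists>j. i - i mod W \<le> j \<and> j \<le> i \<and> opval xs G (yy z ys j))"
    and "G ! (m + 2*i + 1) = (\<exists>j\<le>i. j mod W = i mod W \<and> opval xs G (yy z ys j))"
proof -
  have Si: "G ! (m + 2*i) = (opval xs G (if i mod W = 0 then z else Gate (m + 2*i - 2)) \<or> opval xs G (yy z ys i))
          \<and> G ! (m + 2*i + 1) = (opval xs G (if i < W then z else Gate (m + 2*(i - W) + 1)) \<or> opval xs G (yy z ys i))"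
    if "i < R * W" for i
  proof -
    have "sat xs G (m + 2*i) [(\<lambda>u v. u \<or> v, if i mod W = 0 then z else Gate (m + 2*i - 2), yy z ys i),
       (\<lambda>u v. u \<or> v, if i < W then z else Gate (m + 2*(i - W) + 1), yy z ys i)]"
      using S that unfolding gridB_def by (subst (asm) sat_concat[where c=2]) auto
    then show ?thesis by (simp add: sat_Cons)
  qed
  show "G ! (m + 2*i) = (\<exists>j. i - i mod W \<le> j \<and> j \<le> i \<and> opval xs G (yy z ys j))"
    using i
  proof (induction i)
    case 0 then show ?case using Si[of 0] z by auto
  next
    case (Suc i)
    show ?case
    proof (cases "Suc i mod W = 0")
      case True
      then show ?thesis using Si[OF Suc.prems] z by auto
    next
      case False
      then have md: "Suc i mod W = Suc (i mod W)" by (metis mod_Suc)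
      have IH: "G ! (m + 2*i) = (\<exists>j. i - i mod W \<le> j \<and> j \<le> i \<and> opval xs G (yy z ys j))"
        using Suc by simp
      have e: "m + 2 * Suc i - 2 = m + 2*i" by simp
      have "G ! (m + 2 * Suc i) = (G ! (m + 2*i) \<or> opval xs G (yy z ys (Suc i)))"
        using Si[OF Suc.prems] False by (simp only: if_False e) simp
      show ?thesis
      proof
        assume "G ! (m + 2 * Suc i)"
        then have "G ! (m + 2*i) \<or> opval xs G (yy z ys (Suc i))" using \<open>G ! (m + 2 * Suc i) = _\<close> by simp
        then show "\<exists>j. Suc i - Suc i mod W \<le> j \<and> j \<le> Suc i \<and> opval xs G (yy z ys j)"
        proof
          assume "G ! (m + 2*i)"
          then obtain j where "i - i mod W \<le> j" "j \<le> i" "opval xs G (yy z ys j)" using IH by auto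
          then show ?thesis using md by (intro exI[of _ j]) auto
        next
          assume "opval xs G (yy z ys (Suc i))"
          then show ?thesis by (intro exI[of _ "Suc i"]) auto
        qed
      next
        assume "\<exists>j. Suc i - Suc i mod W \<le> j \<and> j \<le> Suc i \<and> opval xs G (yy z ys j)"
        then obtain j where j: "Suc i - Suc i mod W \<le> j" "j \<le> Suc i" "opval xs G (yy z ys j)" by blast
        show "G ! (m + 2 * Suc i)"
        proof (cases "j = Suc i")
          case True then show ?thesis using j \<open>G ! (m + 2 * Suc i) = _\<close> by simp
        next
          case False
          then have "i - i mod W \<le> j" "j \<le> i" using j md by auto
          then have "G ! (m + 2*i)" using IH j(3) by auto
          then show ?thesis using \<open>G ! (m + 2 * Suc i) = _\<close> by simp
        qed
      qed
    qed
  qed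
  show "G ! (m + 2*i + 1) = (\<exists>j\<le>i. j mod W = i mod W \<and> opval xs G (yy z ys j))"
    using i
  proof (induction i rule: less_induct)
    case (less i)
    show ?case
    proof (cases "i < W")
      case True
      have "j \<le> i \<Longrightarrow> j mod W = i mod W \<Longrightarrow> j = i" for j using True by simp
      then show ?thesis using Si[OF less.prems] True z by auto
    next
      case False
      then have iW: "i - W < i" "i - W < R * W" using W less.prems by auto
      have IH: "G ! (m + 2*(i-W) + 1) = (\<exists>j\<le>i-W. j mod W = (i-W) mod W \<and> opval xs G (yy z ys j))"
        using less.IH[OF iW] .
      have md: "(i - W) mod W = i mod W" using False by (simp add: mod_if)
      have G: "G ! (m + 2*i + 1) = (G ! (m + 2*(i-W) + 1) \<or> opval xs G (yy z ys i))"
        using Si[OF less.prems] False by simp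
      show ?thesis
        unfolding G IH md
      proof
        assume "(\<exists>j\<le>i - W. j mod W = i mod W \<and> opval xs G (yy z ys j)) \<or> opval xs G (yy z ys i)"
        then show "\<exists>j\<le>i. j mod W = i mod W \<and> opval xs G (yy z ys j)"
        proof
          assume "\<exists>j\<le>i - W. j mod W = i mod W \<and> opval xs G (yy z ys j)"
          then obtain j where "j \<le> i - W" "j mod W = i mod W" "opval xs G (yy z ys j)" by blast
          then show ?thesis by (intro exI[of _ j]) auto
        next
          assume "opval xs G (yy z ys i)" then show ?thesis by blast
        qed
      next
        assume "\<exists>j\<le>i. j mod W = i mod W \<and> opval xs G (yy z ys j)"
        then obtain j where j: "j \<le> i" "j mod W = i mod W" "opval xs G (yy z ys j)" by blast
        show "(\<exists>j\<le>i - W. j mod W = i mod W \<and> opval xs G (yy z ys j)) \<or> opval xs G (yy z ys i)"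
        proof (cases "j = i")
          case True then show ?thesis using j by simp
        next
          case False
          then have "j + W \<le> i" using mod_same_le j by blast
          then have "j \<le> i - W" by simp
          then show ?thesis using j by blast
        qed
      qed
    qed
  qed
qed

definition rowsOut :: "nat \<Rightarrow> nat \<Rightarrow> nat \<Rightarrow> operand list" where
  "rowsOut m W R = map (\<lambda>q. Gate (m + 2*(q*W + (W - 1)))) [0..<R]"

definition colsOut :: "nat \<Rightarrow> nat \<Rightarrow> nat \<Rightarrow> operand list" where
  "colsOut m W R = map (\<lambda>c. Gate (m + 2*((R-1)*W + c) + 1)) [0..<W]"

lemma rows_val:
  assumes S: "sat xs G m (gridB m z W R ys)" and z: "\<not> opval xs G z" and W: "W > 0" and q: "q < R"
  shows "opval xs G (rowsOut m W R ! q) = (\<exists>j. j < R*W \<and> opval xs G (yy z ys j) \<and> j div W = q)"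
proof -
  define i where "i = q*W + (W - 1)"
  have iR: "i < R * W"
  proof -
    have "Suc q * W \<le> R * W" using q by (intro mult_le_mono1) simp
    then show ?thesis using W by (simp add: i_def)
  qed
  have im: "i mod W = W - 1" unfolding i_def using W by (simp only: mod_mult_self3) simp
  have id: "i - i mod W = q * W" using im by (simp add: i_def)
  have "opval xs G (rowsOut m W R ! q) = G ! (m + 2*i)" using q by (simp add: rowsOut_def i_def)
  also have "\<dots> = (\<exists>j. q*W \<le> j \<and> j \<le> i \<and> opval xs G (yy z ys j))"
    using gridB_sat(1)[OF S z W iR] id by simp
  also have "\<dots> = (\<exists>j. j < R*W \<and> opval xs G (yy z ys j) \<and> j div W = q)"
  proof -
    have "(q*W \<le> j \<and> j \<le> i) = (j div W = q)" for j
    proof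
      assume "q*W \<le> j \<and> j \<le> i"
      then show "j div W = q" using W by (intro div_nat_eqI) (auto simp: i_def mult.commute)
    next
      assume "j div W = q"
      then show "q*W \<le> j \<and> j \<le> i" using W div_mult_mod_eq[of j W] mod_less_divisor[OF W, of j]
        by (auto simp: i_def)
    qed
    moreover have "j < R * W" if "j div W = q" for j
    proof -
      have "j div W < R" using q that by simp
      then show ?thesis using div_less_iff_less_mult[OF W] by blast
    qed
    ultimately show ?thesis by blast
  qed
  finally show ?thesis .
qed

lemma cols_val:
  assumes S: "sat xs G m (gridB m z W R ys)" and z: "\<not> opval xs G z" and W: "W > 0" and c: "c < W" and R: "R > 0"
  shows "opval xs G (colsOut m W R ! c) = (\<exists>j. j < R*W \<and> opval xs G (yy z ys j) \<and> j mod W = c)"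
proof -
  define i where "i = (R-1)*W + c"
  have iR: "i < R * W"
  proof -
    have "(R-1)*W + W = R * W" using R by (metis Suc_pred' mult_Suc add.commute)
    then show ?thesis using c by (simp add: i_def)
  qed
  have im: "i mod W = c" using c by (simp add: i_def)
  have "opval xs G (colsOut m W R ! c) = G ! (m + 2*i + 1)" using c by (simp add: colsOut_def i_def)
  also have "\<dots> = (\<exists>j\<le>i. j mod W = c \<and> opval xs G (yy z ys j))"
    using gridB_sat(2)[OF S z W iR] im by simp
  also have "\<dots> = (\<exists>j. j < R*W \<and> opval xs G (yy z ys j) \<and> j mod W = c)"
  proof -
    have "(j \<le> i \<and> j mod W = c) = (j < R*W \<and> j mod W = c)" for j
    proof
      assume "j \<le> i \<and> j mod W = c" then show "j < R*W \<and> j mod W = c" using iR by simp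
    next
      assume a: "j < R*W \<and> j mod W = c"
      then have "j div W < R" using div_less_iff_less_mult[OF W] by simp
      then have "j div W * W \<le> (R-1) * W" by (intro mult_le_mono1) simp
      moreover have "j div W * W + j mod W = j" by (rule div_mult_mod_eq)
      ultimately show "j \<le> i \<and> j mod W = c" using a unfolding i_def by linarith
    qed
    then show ?thesis by blast
  qed
  finally show ?thesis .
qed

lemma sum_cb_card: fixes R :: nat shows "(\<Sum>q<R. cb (P q)) = card {q. q < R \<and> P q}"
proof (induction R)
  case 0 then show ?case by simp
next
  case (Suc R)
  show ?case
  proof (cases "P R")
    case True
    then have "{q. q < Suc R \<and> P q} = insert R {q. q < R \<and> P q}" by (auto simp: less_Suc_eq)
    then show ?thesis using Suc True by (simp add: cb_def)
  next
    case False
    then have "{q. q < Suc R \<and> P q} = {q. q < R \<and> P q}" by (auto simp: less_Suc_eq)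
    then show ?thesis using Suc False by (simp add: cb_def)
  qed
qed

lemma card_ge2: "finite A \<Longrightarrow> (2 \<le> card A) = (\<exists>a\<in>A. \<exists>b\<in>A. a \<noteq> b)"
proof
  assume f: "finite A" and c: "2 \<le> card A"
  then obtain a where a: "a \<in> A" by fastforce
  have "card (A - {a}) \<ge> 1" using c a f by (simp add: card_Diff_singleton)
  then have "A - {a} \<noteq> {}" by (metis card.empty not_one_le_zero)
  then obtain b where "b \<in> A - {a}" by blast
  then show "\<exists>a\<in>A. \<exists>b\<in>A. a \<noteq> b" using a by blast
next
  assume f: "finite A" and "\<exists>a\<in>A. \<exists>b\<in>A. a \<noteq> b"
  then obtain a b where ab: "a \<in> A" "b \<in> A" "a \<noteq> b" by blast
  then have "card {a, b} \<le> card A" using f by (intro card_mono) auto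
  then show "2 \<le> card A" using ab by simp
qed

lemma grid_comb:
  fixes S :: "nat set"
  assumes "finite S"
  shows "(2 \<le> card S) = (2 \<le> card ((\<lambda>j. j div W) ` S) \<or> 2 \<le> card ((\<lambda>j. j mod W) ` S))"
proof -
  have A: "(2 \<le> card S) = (\<exists>a\<in>S. \<exists>b\<in>S. a \<noteq> b)" using card_ge2 assms by blast
  have B: "(2 \<le> card ((\<lambda>j. j div W) ` S)) = (\<exists>a\<in>S. \<exists>b\<in>S. a div W \<noteq> b div W)"
    using card_ge2[of "(\<lambda>j. j div W) ` S"] assms by auto
  have C: "(2 \<le> card ((\<lambda>j. j mod W) ` S)) = (\<exists>a\<in>S. \<exists>b\<in>S. a mod W \<noteq> b mod W)"
    using card_ge2[of "(\<lambda>j. j mod W) ` S"] assms by auto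
  have D: "a \<noteq> b \<Longrightarrow> a div W \<noteq> b div W \<or> a mod W \<noteq> b mod W" for a b :: nat
    by (metis div_mult_mod_eq)
  show ?thesis unfolding A B C
  proof
    assume "\<exists>a\<in>S. \<exists>b\<in>S. a \<noteq> b"
    then obtain a b where ab: "a \<in> S" "b \<in> S" "a \<noteq> b" by blast
    from D[OF ab(3)] show "(\<exists>a\<in>S. \<exists>b\<in>S. a div W \<noteq> b div W) \<or> (\<exists>a\<in>S. \<exists>b\<in>S. a mod W \<noteq> b mod W)"
      using ab(1,2) by blast
  next
    assume "(\<exists>a\<in>S. \<exists>b\<in>S. a div W \<noteq> b div W) \<or> (\<exists>a\<in>S. \<exists>b\<in>S. a mod W \<noteq> b mod W)"
    then obtain a b where "a \<in> S" "b \<in> S" "a \<noteq> b" by blast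
    then show "\<exists>a\<in>S. \<exists>b\<in>S. a \<noteq> b" by blast
  qed
qed

definition f1g :: "nat \<Rightarrow> operand \<Rightarrow> nat \<Rightarrow> operand" where
  "f1g m z i = (if i = 0 then z else Gate (m + 3*i - 1))"
definition f2g :: "nat \<Rightarrow> operand \<Rightarrow> nat \<Rightarrow> operand" where
  "f2g m z i = (if i = 0 then z else Gate (m + 3*i - 2))"

definition thr2 :: "nat \<Rightarrow> operand \<Rightarrow> operand list \<Rightarrow> instr list" where
  "thr2 m z es = concat (map (\<lambda>i. [(\<lambda>u v. u \<and> v, f1g m z i, es ! i), (\<lambda>u v. u \<or> v, f2g m z i, Gate (m + 3*i)),
      (\<lambda>u v. u \<or> v, f1g m z i, es ! i)]) [0..<length es])"

lemma thr2_len[simp]: "length (thr2 m z es) = 3 * length es"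
  unfolding thr2_def by (subst concat_uniform_length[where c=3]) auto

lemma thr2_sat:
  assumes S: "sat xs G m (thr2 m z es)" and z: "\<not> opval xs G z" and i: "i \<le> length es"
  shows "opval xs G (f1g m z i) = (1 \<le> (\<Sum>j<i. cb (opval xs G (es ! j))))
       \<and> opval xs G (f2g m z i) = (2 \<le> (\<Sum>j<i. cb (opval xs G (es ! j))))"
  using i
proof (induction i)
  case 0 then show ?case using z by (simp add: f1g_def f2g_def)
next
  case (Suc i)
  have Si: "sat xs G (m + 3*i) [(\<lambda>u v. u \<and> v, f1g m z i, es ! i), (\<lambda>u v. u \<or> v, f2g m z i, Gate (m + 3*i)),
      (\<lambda>u v. u \<or> v, f1g m z i, es ! i)]"
    using S Suc.prems unfolding thr2_def by (subst (asm) sat_concat[where c=3]) auto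
  then have E: "G ! (m + 3*i) = (opval xs G (f1g m z i) \<and> opval xs G (es ! i))"
     "G ! (m + 3*i + 1) = (opval xs G (f2g m z i) \<or> G ! (m + 3*i))"
     "G ! (m + 3*i + 2) = (opval xs G (f1g m z i) \<or> opval xs G (es ! i))"
    by (simp_all add: sat_Cons numeral_eq_Suc)
  have F: "f1g m z (Suc i) = Gate (m + 3*i + 2)" "f2g m z (Suc i) = Gate (m + 3*i + 1)"
    by (simp_all add: f1g_def f2g_def)
  have IH: "opval xs G (f1g m z i) = (1 \<le> (\<Sum>j<i. cb (opval xs G (es ! j))))"
       "opval xs G (f2g m z i) = (2 \<le> (\<Sum>j<i. cb (opval xs G (es ! j))))"
    using Suc by auto
  show ?case unfolding F using E IH by (auto simp: cb_def)
qed

lemma thr2_wf: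
  assumes "\<forall>e\<in>set es. wf_operand n m e" "wf_operand n m z"
  shows "wfb n m (thr2 m z es)"
  unfolding thr2_def
proof (subst wfb_concat[where c=3], simp, intro allI impI)
  fix i assume i: "i < length es"
  have W: "wf_operand n (m + 3*i + j) q" if "wf_operand n m q" for q j
    using wf_operand_mono that by simp
  have e: "wf_operand n m (es ! i)" using assms i by auto
  have f1: "wf_operand n (m + 3*i) (f1g m z i)" using assms(2) W[of z 0] by (auto simp: f1g_def)
  have f2: "wf_operand n (m + 3*i) (f2g m z i)" using assms(2) W[of z 0] by (auto simp: f2g_def)
  show "wfb n (m + 3 * i) [(\<lambda>u v. u \<and> v, f1g m z i, es ! i), (\<lambda>u v. u \<or> v, f2g m z i, Gate (m + 3*i)),
      (\<lambda>u v. u \<or> v, f1g m z i, es ! i)]"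
    using f1 W[OF e, of 0] W[OF e, of 2] wf_operand_mono[OF f1, of "m + 3*i+2"] wf_operand_mono[OF f2, of "m + 3*i+1"]
    by (simp add: wfb_Cons)
qed

fun glen :: "nat \<Rightarrow> nat" where
  "glen 0 = 1"
| "glen (Suc l) = 2 * glen l + 3"

fun gen :: "nat \<Rightarrow> operand \<Rightarrow> operand list \<Rightarrow> (bool list \<Rightarrow> bool) \<Rightarrow> instr list" where
  "gen m z [] F = [(\<lambda>_ _. F [], z, z)]"
| "gen m z (q # qs) F = (let P1 = gen m z qs (\<lambda>bs. F (True # bs));
      P0 = gen (m + length P1) z qs (\<lambda>bs. F (False # bs)); m' = m + length P1 + length P0 in
      P1 @ P0 @ [(\<lambda>a b. a \<and> b, q, Gate (m + length P1 - 1)), (\<lambda>a b. \<not> a \<and> b, q, Gate (m' - 1)),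
                 (\<lambda>a b. a \<or> b, Gate m', Gate (m' + 1))])"

lemma gen_len[simp]: "length (gen m z qs F) = glen (length qs)"
  by (induction qs arbitrary: m F) (auto simp: Let_def)

lemma glen_pos: "glen l > 0" by (cases l) auto

lemma gen_sat:
  assumes "sat xs G m (gen m z qs F)"
  shows "G ! (m + glen (length qs) - 1) = F (map (opval xs G) qs)"
  using assms
proof (induction qs arbitrary: m F)
  case Nil then show ?case by (simp add: sat_Cons)
next
  case (Cons q qs)
  define l where "l = glen (length qs)"
  have lp: "l > 0" using glen_pos l_def by simp
  define m' where "m' = m + l + l"
  have S: "sat xs G m (gen m z qs (\<lambda>bs. F (True # bs)))"
       "sat xs G (m + l) (gen (m + l) z qs (\<lambda>bs. F (False # bs)))"
       "sat xs G m' [(\<lambda>a b. a \<and> b, q, Gate (m + l - 1)), (\<lambda>a b. \<not> a \<and> b, q, Gate (m' - 1)),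
                 (\<lambda>a b. a \<or> b, Gate m', Gate (m' + 1))]"
    using Cons.prems by (simp_all add: Let_def sat_append l_def m'_def)
  have I1: "G ! (m + l - 1) = F (True # map (opval xs G) qs)" using Cons.IH[OF S(1)] l_def by simp
  have I0: "G ! (m' - 1) = F (False # map (opval xs G) qs)" using Cons.IH[OF S(2)] l_def m'_def by (simp add: add.assoc)
  have E: "G ! m' = (opval xs G q \<and> G ! (m + l - 1))" "G ! (Suc m') = (\<not> opval xs G q \<and> G ! (m' - 1))"
     "G ! (Suc (Suc m')) = (G ! m' \<or> G ! (Suc m'))"
    using S(3) by (simp_all add: sat_Cons)
  have idx: "m + glen (length (q # qs)) - 1 = Suc (Suc m')" using lp by (simp add: l_def m'_def)
  show ?case unfolding idx using E I1 I0 by (cases "opval xs G q") auto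
qed

lemma gen_wf:
  assumes "\<forall>q\<in>set qs. wf_operand n m q" "wf_operand n m z"
  shows "wfb n m (gen m z qs F)"
  using assms
proof (induction qs arbitrary: m F)
  case Nil then show ?case by (simp add: wfb_Cons)
next
  case (Cons q qs)
  define l where "l = glen (length qs)"
  have lp: "l > 0" using glen_pos l_def by simp
  define m' where "m' = m + l + l"
  have W1: "wfb n m (gen m z qs (\<lambda>bs. F (True # bs)))" using Cons by simp
  have W0: "wfb n (m + l) (gen (m + l) z qs (\<lambda>bs. F (False # bs)))"
    using Cons.IH[of "m + l"] Cons.prems wf_operand_mono[of n m _ "m+l"] by simp
  have q: "wf_operand n m' q" using Cons.prems wf_operand_mono[of n m q m'] by (simp add: m'_def)
  have W3: "wfb n m' [(\<lambda>a b. a \<and> b, q, Gate (m + l - 1)), (\<lambda>a b. \<not> a \<and> b, q, Gate (m' - 1)),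
                 (\<lambda>a b. a \<or> b, Gate m', Gate (m' + 1))]"
    using q wf_operand_mono[OF q] lp by (simp add: wfb_Cons m'_def; linarith)
  show ?case using W1 W0 W3 by (simp add: Let_def wfb_append l_def m'_def)
qed

lemma gridB_wf:
  assumes "\<forall>y\<in>set ys. wf_operand n m y" "wf_operand n m z" "W > 0"
  shows "wfb n m (gridB m z W R ys)"
  unfolding gridB_def
proof (subst wfb_concat[where c=2], simp, intro allI impI)
  fix i assume i: "i < R * W"
  have W: "wf_operand n (m + 2*i + j) q" if "wf_operand n m q" for q j
    using wf_operand_mono that by simp
  have y: "wf_operand n m (yy z ys i)" using assms by (auto simp: yy_def)
  have a: "wf_operand n (m + 2*i) (if i mod W = 0 then z else Gate (m + 2*i - 2))"
    using W[OF assms(2), of 0] by (cases "i = 0") auto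
  have b: "wf_operand n (Suc (m + 2*i)) (if i < W then z else Gate (m + 2*(i - W) + 1))"
    using W[OF assms(2), of 1] assms(3) by auto
  show "wfb n (m + 2 * i) [(\<lambda>u v. u \<or> v, if i mod W = 0 then z else Gate (m + 2*i - 2), yy z ys i),
       (\<lambda>u v. u \<or> v, if i < W then z else Gate (m + 2*(i - W) + 1), yy z ys i)]"
    using a b W[OF y, of 0] W[OF y, of 1] by (simp add: wfb_Cons)
qed

lemma psum_list: "psum xs G ps = sum_list (map (\<lambda>p. cntp (opval xs G (fst p)) (opval xs G (snd p))) ps)"
  unfolding psum_def by (simp add: sum_list_sum_nth atLeast0LessThan)

lemma psum_append: "psum xs G (A @ B) = psum xs G A + psum xs G B"
  by (simp add: psum_list)

lemma count_sum: "length (filter id xs) = (\<Sum>j<length xs. cb (xs ! j))"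
proof (induction xs)
  case Nil then show ?case by simp
next
  case (Cons x xs)
  have "(\<Sum>j<length (x # xs). cb ((x # xs) ! j)) = cb x + (\<Sum>j<length xs. cb (xs ! j))"
    by (simp only: length_Cons sum.lessThan_Suc_shift) simp
  then show ?case using Cons by (simp add: cb_def)
qed

definition z0 :: operand where "z0 = Gate 0"
definition pairB :: "nat \<Rightarrow> instr list" where
  "pairB n = map (\<lambda>i. (\<lambda>u v. u \<noteq> v, Inp (2*i), Inp (2*i+1))) [0..<n div 2]"
definition ps0 :: "nat \<Rightarrow> (operand \<times> operand) list" where
  "ps0 n = map (\<lambda>i. (Inp (2*i), Gate (1+i))) [0..<n div 2] @ (if odd n then [(z0, Inp (n-1))] else [])"
definition m1 :: "nat \<Rightarrow> nat" where "m1 n = 1 + n div 2"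
definition LE where "LE n L = levelsE (L - 1) (m1 n) z0 (ps0 n)"
definition m2 where "m2 n L = m1 n + length (fst (LE n L))"
definition qsL where "qsL n L = snd (snd (LE n L))"
definition bsL where "bsL n L = fst (snd (LE n L))"
definition m3 where "m3 n L = m2 n L + 8 * ng (length (qsL n L))"
definition ysL where "ysL n L = outP (m2 n L) (qsL n L)"
definition RR where "RR n L W = length (ysL n L) div W + 1"
definition m4 where "m4 n L W = m3 n L + 2 * (RR n L W * W)"
definition m5 where "m5 n L W = m4 n L W + 3 * RR n L W"
definition m6 where "m6 n L W = m5 n L W + 3 * W"
definition finops where
  "finops n L W = bsL n L @ [bitC 3 (m2 n L) z0 (qsL n L), f1g (m4 n L W) z0 (RR n L W),
      f2g (m4 n L W) z0 (RR n L W), f2g (m5 n L W) z0 W]"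
definition Ffin :: "nat \<Rightarrow> nat \<Rightarrow> bool list \<Rightarrow> bool" where
  "Ffin k L bl = (bl!(L+1) \<or> bl!(L+2) \<or> k \<le> (\<Sum>i<L. 2^i * cb (bl!i)) + 2^L * cb (bl!L))"
definition prog where
  "prog n k L W = [(\<lambda>_ _. False, Inp 0, Inp 0)] @ pairB n @ fst (LE n L) @ chainP (m2 n L) z0 (qsL n L)
     @ gridB (m3 n L) z0 W (RR n L W) (ysL n L) @ thr2 (m4 n L W) z0 (rowsOut (m3 n L) W (RR n L W))
     @ thr2 (m5 n L W) z0 (colsOut (m3 n L) W (RR n L W)) @ gen (m6 n L W) z0 (finops n L W) (Ffin k L)"

lemma bsL_len: "length (bsL n L) = L - 1"
  by (simp add: bsL_def LE_def levelsE_len)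

lemma finops_len: "L \<ge> 1 \<Longrightarrow> length (finops n L W) = L + 3"
  by (simp add: finops_def bsL_len)

lemma prog_len: "L \<ge> 1 \<Longrightarrow> length (prog n k L W) = m6 n L W + glen (L + 3)"
  by (simp add: prog_def finops_len m6_def m5_def m4_def m3_def m2_def m1_def pairB_def rowsOut_def colsOut_def)

lemma prog_wf:
  assumes n: "n \<ge> 1" and W: "W \<ge> 1"
  shows "wf_prog n (prog n k L W)"
proof -
  have z1: "wf_operand n m z0" if "m \<ge> 1" for m using that by (simp add: z0_def)
  have A: "wfb n 0 [(\<lambda>_ _. False, Inp 0, Inp 0)]" using n by (simp add: wfb_Cons)
  have B: "wfb n 1 (pairB n)"
    unfolding pairB_def wfb_def by auto
  have ps: "wfps n (m1 n) (ps0 n)"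
    using n by (auto simp: wfps_def ps0_def m1_def z0_def)
  have LEw: "wfb n (m1 n) (fst (LE n L)) \<and> wfps n (m2 n L) (qsL n L)
     \<and> (\<forall>b\<in>set (bsL n L). wf_operand n (m2 n L) b)"
    using levelsE_wf[OF ps z1] by (simp add: LE_def m2_def qsL_def bsL_def m1_def)
  have C: "wfb n (m2 n L) (chainP (m2 n L) z0 (qsL n L))"
    using chainP_wf LEw z1 by (simp add: m2_def m1_def)
  have D: "wfb n (m3 n L) (gridB (m3 n L) z0 W (RR n L W) (ysL n L))"
  proof -
    have "\<forall>y\<in>set (ysL n L). wf_operand n (m3 n L) y" unfolding ysL_def m3_def by (rule outP_wf)
    moreover have "wf_operand n (m3 n L) z0" by (rule z1) (simp add: m3_def m2_def m1_def)
    ultimately show ?thesis using gridB_wf W by simp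
  qed
  have RRp: "RR n L W \<ge> 1" by (simp add: RR_def)
  have E: "wfb n (m4 n L W) (thr2 (m4 n L W) z0 (rowsOut (m3 n L) W (RR n L W)))"
  proof (rule thr2_wf)
    show "\<forall>e\<in>set (rowsOut (m3 n L) W (RR n L W)). wf_operand n (m4 n L W) e"
    proof
      fix e assume "e \<in> set (rowsOut (m3 n L) W (RR n L W))"
      then obtain q where q: "q < RR n L W" "e = Gate (m3 n L + 2*(q*W + (W - 1)))" by (auto simp: rowsOut_def)
      have "Suc q * W \<le> RR n L W * W" using q by (intro mult_le_mono1) simp
      then show "wf_operand n (m4 n L W) e" using q W by (simp add: m4_def)
    qed
    show "wf_operand n (m4 n L W) z0" by (rule z1) (simp add: m4_def m3_def m2_def m1_def)
  qed
  have F: "wfb n (m5 n L W) (thr2 (m5 n L W) z0 (colsOut (m3 n L) W (RR n L W)))"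
  proof (rule thr2_wf)
    show "\<forall>e\<in>set (colsOut (m3 n L) W (RR n L W)). wf_operand n (m5 n L W) e"
    proof
      fix e assume "e \<in> set (colsOut (m3 n L) W (RR n L W))"
      then obtain c where c: "c < W" "e = Gate (m3 n L + 2*((RR n L W - 1)*W + c) + 1)" by (auto simp: colsOut_def)
      have "(RR n L W - 1) * W + W = RR n L W * W" using RRp by (cases "RR n L W") auto
      then show "wf_operand n (m5 n L W) e" using c by (simp add: m5_def m4_def)
    qed
    show "wf_operand n (m5 n L W) z0" by (rule z1) (simp add: m5_def m4_def m3_def m2_def m1_def)
  qed
  have G: "wfb n (m6 n L W) (gen (m6 n L W) z0 (finops n L W) (Ffin k L))"
  proof (rule gen_wf)
    show "wf_operand n (m6 n L W) z0" by (rule z1) (simp add: m6_def m5_def m4_def m3_def m2_def m1_def)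
    have le: "m2 n L \<le> m6 n L W" "m3 n L \<le> m6 n L W" by (simp_all add: m6_def m5_def m4_def m3_def)
    have b1: "\<forall>b\<in>set (bsL n L). wf_operand n (m6 n L W) b" using LEw wf_operand_mono le by blast
    have b2: "wf_operand n (m6 n L W) (bitC 3 (m2 n L) z0 (qsL n L))"
      using bitC_wf[of n "m2 n L" z0 3 "qsL n L"] z1 wf_operand_mono le by (simp add: m3_def m2_def m1_def)
    have b3: "wf_operand n (m6 n L W) (f1g (m4 n L W) z0 (RR n L W))" "wf_operand n (m6 n L W) (f2g (m4 n L W) z0 (RR n L W))"
      using RRp by (auto simp: f1g_def f2g_def m6_def m5_def)
    have b4: "wf_operand n (m6 n L W) (f2g (m5 n L W) z0 W)"
      using W by (auto simp: f2g_def m6_def)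
    show "\<forall>q\<in>set (finops n L W). wf_operand n (m6 n L W) q"
      using b1 b2 b3 b4 by (auto simp: finops_def)
  qed
  have lens: "1 + length (pairB n) = m1 n" "m1 n + length (fst (LE n L)) = m2 n L"
     "m2 n L + length (chainP (m2 n L) z0 (qsL n L)) = m3 n L"
     "m3 n L + length (gridB (m3 n L) z0 W (RR n L W) (ysL n L)) = m4 n L W"
     "m4 n L W + length (thr2 (m4 n L W) z0 (rowsOut (m3 n L) W (RR n L W))) = m5 n L W"
     "m5 n L W + length (thr2 (m5 n L W) z0 (colsOut (m3 n L) W (RR n L W))) = m6 n L W"
    by (simp_all add: pairB_def m1_def m2_def m3_def m4_def m5_def m6_def rowsOut_def colsOut_def)
  have ap: "wfb n m (X @ Y)" if "wfb n m X" "m + length X = m'" "wfb n m' Y" for m m' X Y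
    using that by (simp add: wfb_append)
  have s6: "wfb n (m5 n L W) (thr2 (m5 n L W) z0 (colsOut (m3 n L) W (RR n L W)) @ gen (m6 n L W) z0 (finops n L W) (Ffin k L))"
    by (rule ap[OF F lens(6) G])
  have s5: "wfb n (m4 n L W) (thr2 (m4 n L W) z0 (rowsOut (m3 n L) W (RR n L W)) @ thr2 (m5 n L W) z0 (colsOut (m3 n L) W (RR n L W)) @ gen (m6 n L W) z0 (finops n L W) (Ffin k L))"
    by (rule ap[OF E lens(5) s6])
  have s4: "wfb n (m3 n L) (gridB (m3 n L) z0 W (RR n L W) (ysL n L) @ thr2 (m4 n L W) z0 (rowsOut (m3 n L) W (RR n L W)) @ thr2 (m5 n L W) z0 (colsOut (m3 n L) W (RR n L W)) @ gen (m6 n L W) z0 (finops n L W) (Ffin k L))"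
    by (rule ap[OF D lens(4) s5])
  have s3: "wfb n (m2 n L) (chainP (m2 n L) z0 (qsL n L) @ gridB (m3 n L) z0 W (RR n L W) (ysL n L) @ thr2 (m4 n L W) z0 (rowsOut (m3 n L) W (RR n L W)) @ thr2 (m5 n L W) z0 (colsOut (m3 n L) W (RR n L W)) @ gen (m6 n L W) z0 (finops n L W) (Ffin k L))"
    by (rule ap[OF C lens(3) s4])
  have s2: "wfb n (m1 n) (fst (LE n L) @ chainP (m2 n L) z0 (qsL n L) @ gridB (m3 n L) z0 W (RR n L W) (ysL n L) @ thr2 (m4 n L W) z0 (rowsOut (m3 n L) W (RR n L W)) @ thr2 (m5 n L W) z0 (colsOut (m3 n L) W (RR n L W)) @ gen (m6 n L W) z0 (finops n L W) (Ffin k L))"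
    by (rule ap[OF conjunct1[OF LEw] lens(2) s3])
  have s1: "wfb n 1 (pairB n @ fst (LE n L) @ chainP (m2 n L) z0 (qsL n L) @ gridB (m3 n L) z0 W (RR n L W) (ysL n L) @ thr2 (m4 n L W) z0 (rowsOut (m3 n L) W (RR n L W)) @ thr2 (m5 n L W) z0 (colsOut (m3 n L) W (RR n L W)) @ gen (m6 n L W) z0 (finops n L W) (Ffin k L))"
    by (rule ap[OF B lens(1) s2])
  show ?thesis unfolding wf_prog_wfb prog_def
    by (rule ap[OF A _ s1]) simp
qed

lemma prog_lens: "1 + length (pairB n) = m1 n" "m1 n + length (fst (LE n L)) = m2 n L"
     "m2 n L + length (chainP (m2 n L) z0 (qsL n L)) = m3 n L"
     "m3 n L + length (gridB (m3 n L) z0 W (RR n L W) (ysL n L)) = m4 n L W"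
     "m4 n L W + length (thr2 (m4 n L W) z0 (rowsOut (m3 n L) W (RR n L W))) = m5 n L W"
     "m5 n L W + length (thr2 (m5 n L W) z0 (colsOut (m3 n L) W (RR n L W))) = m6 n L W"
    by (simp_all add: pairB_def m1_def m2_def m3_def m4_def m5_def m6_def rowsOut_def colsOut_def)

lemma sat_split: "sat xs G m (X @ Y) \<Longrightarrow> m + length X = m' \<Longrightarrow> sat xs G m X \<and> sat xs G m' Y"
  by (simp add: sat_append)

lemma prog_correct:
  assumes n: "n \<ge> 1" and L: "L \<ge> 1" and W: "W \<ge> 1" and k: "k \<le> 2^(L+1)" and xs: "length xs = n"
  shows "run (prog n k L W) xs [] ! (m6 n L W + glen (L+3) - 1) = THR n k xs"
proof -
  define G where "G = run (prog n k L W) xs []"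
  have S: "sat xs G 0 (prog n k L W)" using run_sat[OF prog_wf[OF n W]] G_def by simp
  note spl = sat_split[OF S[unfolded prog_def]]
  have SA: "sat xs G 0 [(\<lambda>_ _. False, Inp 0, Inp 0)]" using spl by simp
  note spl1 = sat_split[OF conjunct2[OF spl] prog_lens(1)] 
  have SB: "sat xs G 1 (pairB n)" using spl1 by simp
  note spl2 = sat_split[OF conjunct2[OF spl1[simplified]] prog_lens(2)]
  have SL: "sat xs G (m1 n) (fst (LE n L))" using spl2 by simp
  note spl3 = sat_split[OF conjunct2[OF spl2] prog_lens(3)]
  have SC: "sat xs G (m2 n L) (chainP (m2 n L) z0 (qsL n L))" using spl3 by simp
  note spl4 = sat_split[OF conjunct2[OF spl3] prog_lens(4)]
  have SD: "sat xs G (m3 n L) (gridB (m3 n L) z0 W (RR n L W) (ysL n L))" using spl4 by simp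
  note spl5 = sat_split[OF conjunct2[OF spl4] prog_lens(5)]
  have SE: "sat xs G (m4 n L W) (thr2 (m4 n L W) z0 (rowsOut (m3 n L) W (RR n L W)))" using spl5 by simp
  note spl6 = sat_split[OF conjunct2[OF spl5] prog_lens(6)]
  have SF: "sat xs G (m5 n L W) (thr2 (m5 n L W) z0 (colsOut (m3 n L) W (RR n L W)))" using spl6 by simp
  have SG: "sat xs G (m6 n L W) (gen (m6 n L W) z0 (finops n L W) (Ffin k L))" using spl6 by simp
  have z: "\<not> opval xs G z0" using SA by (simp add: sat_Cons z0_def)
  define h where "h = n div 2"
  have pairv: "G ! Suc i = (xs ! (2*i) \<noteq> xs ! (2*i+1))" if "i < h" for i
    using SB that unfolding sat_def pairB_def h_def by auto
  have P0: "psum xs G (ps0 n) = length (filter id xs)"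
  proof -
    have A: "psum xs G (map (\<lambda>i. (Inp (2*i), Gate (1+i))) [0..<h]) = (\<Sum>i<h. cb (xs ! (2*i)) + cb (xs ! (2*i+1)))"
      unfolding psum_def by (rule sum.cong) (auto simp: pairv cntp_def cb_def)
    have B: "psum xs G (if odd n then [(z0, Inp (n-1))] else []) = (if odd n then cb (xs ! (n-1)) else 0)"
      using z by (simp add: psum_def cntp_def cb_def)
    have nn: "n = 2*h + (if odd n then 1 else 0)" by (simp add: h_def)
    have C: "psum xs G (ps0 n) = psum xs G (map (\<lambda>i. (Inp (2*i), Gate (1+i))) [0..<h]) + psum xs G (if odd n then [(z0, Inp (n-1))] else [])"
      unfolding ps0_def h_def by (rule psum_append)
    have "length (filter id xs) = (\<Sum>j<n. cb (xs ! j))" using count_sum xs by simp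
    also have "\<dots> = (\<Sum>j<2*h. cb (xs ! j)) + (if odd n then cb (xs ! (n-1)) else 0)"
    proof (cases "odd n")
      case True
      then have "n = Suc (2*h)" using nn by simp
      then show ?thesis using True by simp
    next
      case False then show ?thesis using nn by simp
    qed
    also have "(\<Sum>j<2*h. cb (xs ! j)) = (\<Sum>i<h. cb (xs ! (2*i)) + cb (xs ! (2*i+1)))" by (rule sum_pairs)
    finally have D: "length (filter id xs) = (\<Sum>i<h. cb (xs ! (2*i)) + cb (xs ! (2*i+1))) + (if odd n then cb (xs ! (n-1)) else 0)" .
    show ?thesis by (simp only: C A B D)
  qed
  define bs where "bs = bsL n L"
  define qs where "qs = qsL n L"
  have P1: "psum xs G (ps0 n) = (\<Sum>i<L-1. 2^i * cb (opval xs G (bs ! i))) + 2^(L-1) * psum xs G qs"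
    using levelsE_sat[OF SL[unfolded LE_def] z] by (simp add: bs_def qs_def bsL_def qsL_def LE_def)
  define bP where "bP = bitC 3 (m2 n L) z0 qs"
  define ys where "ys = ysL n L"
  have P2: "psum xs G qs = cb (opval xs G bP) + 2 * bsum xs G ys"
    using chainP_sat[OF SC z] by (simp add: bP_def ys_def ysL_def qs_def)
  define R where "R = RR n L W"
  define M where "M = length ys"
  have RW: "M < R * W"
  proof -
    have "M mod W < W" using W by simp
    moreover have "M div W * W + M mod W = M" by (rule div_mult_mod_eq)
    moreover have "(M div W + 1) * W = M div W * W + W" by simp
    ultimately have "M < (M div W + 1) * W" by linarith
    then show ?thesis by (simp add: R_def RR_def M_def ys_def)
  qed
  define Sset where "Sset = {j. j < R*W \<and> opval xs G (yy z0 ys j)}"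
  have finS: "finite Sset" by (simp add: Sset_def)
  define T where "T = bsum xs G ys"
  have TS: "T = card Sset"
  proof -
    have "T = card {j. j < M \<and> opval xs G (ys ! j)}" unfolding T_def bsum_def M_def by (rule sum_cb_card)
    also have "{j. j < M \<and> opval xs G (ys ! j)} = Sset"
      using RW z by (auto simp: Sset_def yy_def M_def)
    finally show ?thesis .
  qed
  have W0: "W > 0" using W by simp
  have R0: "R > 0" by (simp add: R_def RR_def)
  have SD': "sat xs G (m3 n L) (gridB (m3 n L) z0 W R ys)" using SD by (simp add: R_def ys_def)
  have rowsum: "(\<Sum>q<R. cb (opval xs G (rowsOut (m3 n L) W R ! q))) = card ((\<lambda>j. j div W) ` Sset)"
  proof -
    have "(\<Sum>q<R. cb (opval xs G (rowsOut (m3 n L) W R ! q))) = (\<Sum>q<R. cb (\<exists>j. j < R*W \<and> opval xs G (yy z0 ys j) \<and> j div W = q))"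
      by (rule sum.cong) (simp_all add: rows_val[OF SD' z W0])
    also have "\<dots> = card {q. q < R \<and> (\<exists>j. j < R*W \<and> opval xs G (yy z0 ys j) \<and> j div W = q)}" by (rule sum_cb_card)
    also have "{q. q < R \<and> (\<exists>j. j < R*W \<and> opval xs G (yy z0 ys j) \<and> j div W = q)} = (\<lambda>j. j div W) ` Sset"
    proof (intro set_eqI iffI)
      fix q assume "q \<in> (\<lambda>j. j div W) ` Sset"
      then obtain j where j: "j \<in> Sset" "q = j div W" by blast
      then have "q < R" using div_less_iff_less_mult[OF W0] by (simp add: Sset_def)
      then show "q \<in> {q. q < R \<and> (\<exists>j. j < R*W \<and> opval xs G (yy z0 ys j) \<and> j div W = q)}" using j by (auto simp: Sset_def)
    qed (auto simp: Sset_def)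
    finally show ?thesis .
  qed
  have colsum: "(\<Sum>c<W. cb (opval xs G (colsOut (m3 n L) W R ! c))) = card ((\<lambda>j. j mod W) ` Sset)"
  proof -
    have "(\<Sum>c<W. cb (opval xs G (colsOut (m3 n L) W R ! c))) = (\<Sum>c<W. cb (\<exists>j. j < R*W \<and> opval xs G (yy z0 ys j) \<and> j mod W = c))"
      by (rule sum.cong) (simp_all add: cols_val[OF SD' z W0 _ R0])
    also have "\<dots> = card {c. c < W \<and> (\<exists>j. j < R*W \<and> opval xs G (yy z0 ys j) \<and> j mod W = c)}" by (rule sum_cb_card)
    also have "{c. c < W \<and> (\<exists>j. j < R*W \<and> opval xs G (yy z0 ys j) \<and> j mod W = c)} = (\<lambda>j. j mod W) ` Sset"
      using W0 by (auto simp: Sset_def)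
    finally show ?thesis .
  qed
  define r1 where "r1 = f1g (m4 n L W) z0 R"
  define r2 where "r2 = f2g (m4 n L W) z0 R"
  define c2 where "c2 = f2g (m5 n L W) z0 W"
  have TR: "opval xs G r1 = (1 \<le> card ((\<lambda>j. j div W) ` Sset)) \<and> opval xs G r2 = (2 \<le> card ((\<lambda>j. j div W) ` Sset))"
    using thr2_sat[OF SE z, of R] rowsum by (simp add: r1_def r2_def R_def rowsOut_def)
  have TC: "opval xs G c2 = (2 \<le> card ((\<lambda>j. j mod W) ` Sset))"
    using thr2_sat[OF SF z, of W] colsum by (simp add: c2_def R_def colsOut_def)
  have T1: "opval xs G r1 = (1 \<le> T)"
  proof -
    have "(1 \<le> card ((\<lambda>j. j div W) ` Sset)) = (Sset \<noteq> {})" using finS by (simp add: Suc_le_eq card_gt_0_iff)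
    also have "\<dots> = (1 \<le> T)" using finS TS by (simp add: Suc_le_eq card_gt_0_iff)
    finally show ?thesis using TR by simp
  qed
  have T2: "(opval xs G r2 \<or> opval xs G c2) = (2 \<le> T)"
    using TR TC grid_comb[OF finS, of W] TS by simp
  define bl where "bl = map (opval xs G) (finops n L W)"
  have GEN: "G ! (m6 n L W + glen (L+3) - 1) = Ffin k L bl"
    using gen_sat[OF SG] finops_len[OF L] by (simp add: bl_def)
  have bl1: "bl ! i = opval xs G (bs ! i)" if "i < L - 1" for i
    using that bsL_len[of n L] by (simp add: bl_def finops_def nth_append bs_def)
  have gen4: "bl ! ((L-1) + j) = [opval xs G bP, opval xs G r1, opval xs G r2, opval xs G c2] ! j" if "j < 4" for j
    using that bsL_len[of n L] by (simp add: bl_def finops_def nth_append bs_def bP_def qs_def r1_def r2_def c2_def R_def)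
  have e: "L = (L-1) + 1" "L+1 = (L-1)+2" "L+2 = (L-1)+3" using L by auto
  have blL: "bl ! (L - 1) = opval xs G bP" "bl ! L = opval xs G r1" "bl ! (L+1) = opval xs G r2" "bl ! (L+2) = opval xs G c2"
    using gen4[of 0] gen4[of 1] gen4[of 2] gen4[of 3] e by (simp_all only:) simp_all
  define Sb where "Sb = (\<Sum>i<L. 2^i * cb (bl ! i))"
  have SbE: "Sb = (\<Sum>i<L-1. 2^i * cb (opval xs G (bs ! i))) + 2^(L-1) * cb (opval xs G bP)"
  proof -
    have LL: "L = Suc (L-1)" using L by simp
    have "Sb = (\<Sum>i<Suc (L-1). 2^i * cb (bl ! i))" unfolding Sb_def using LL by simp
    also have "\<dots> = (\<Sum>i<L-1. 2^i * cb (bl ! i)) + 2^(L-1) * cb (bl ! (L-1))" by simp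
    also have "(\<Sum>i<L-1. 2^i * cb (bl ! i)) = (\<Sum>i<L-1. 2^i * cb (opval xs G (bs ! i)))"
      by (rule sum.cong) (simp_all add: bl1)
    finally show ?thesis using blL(1) by simp
  qed
  have pw: "2^(L-1) * 2 = (2::nat)^L" using L by (cases L) auto
  have ONES: "length (filter id xs) = Sb + 2^L * T"
  proof -
    have "length (filter id xs) = (\<Sum>i<L-1. 2^i * cb (opval xs G (bs ! i))) + 2^(L-1) * (cb (opval xs G bP) + 2 * T)"
      using P0 P1 P2 T_def by simp
    also have "\<dots> = Sb + (2^(L-1) * 2) * T" unfolding SbE by (simp add: algebra_simps)
    finally show ?thesis using pw by simp
  qed
  have FF: "Ffin k L bl = (opval xs G r2 \<or> opval xs G c2 \<or> k \<le> Sb + 2^L * cb (opval xs G r1))"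
    unfolding Ffin_def Sb_def using blL by simp
  have "G ! (m6 n L W + glen (L+3) - 1) = THR n k xs"
  proof (cases "2 \<le> T")
    case True
    then have a: "2^L * 2 \<le> 2^L * T" by simp
    have b: "2^(L+1) = 2^L * (2::nat)" by simp
    have "2^(L+1) \<le> length (filter id xs)" using ONES a b by linarith
    then show ?thesis using GEN FF T2 True k by (auto simp: THR_def)
  next
    case False
    then have "cb (opval xs G r1) = T" using T1 by (cases T) (auto simp: cb_def)
    then show ?thesis using GEN FF T2 False ONES by (simp add: THR_def)
  qed
  then show ?thesis by (simp add: G_def)
qed

lemma ps0_len: "length (ps0 n) = n div 2 + n mod 2"
  by (simp add: ps0_def odd_iff_mod_2_eq_one)

lemma K_bound:
  assumes "2 * K0 \<le> n + 1"
  shows "2^(j+1) * (ng ^^ j) K0 \<le> n + 2^(j+1)"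
proof (induction j)
  case 0 then show ?case using assms by simp
next
  case (Suc j)
  have "2 * ng ((ng ^^ j) K0) \<le> (ng ^^ j) K0 + 1" by (simp add: ng_def)
  then have "2^(j+1) * (2 * ng ((ng ^^ j) K0)) \<le> 2^(j+1) * ((ng ^^ j) K0 + 1)" by (rule mult_le_mono2)
  then show ?case using Suc by (simp add: algebra_simps)
qed

lemma K_bound_real:
  assumes "2 * K0 \<le> n + 1"
  shows "real ((ng ^^ j) K0) \<le> real n / 2^(j+1) + 1"
proof -
  have "real (2^(j+1) * (ng ^^ j) K0) \<le> real (n + 2^(j+1))" using K_bound[OF assms, of j] of_nat_le_iff by blast
  then have "2^(j+1) * real ((ng ^^ j) K0) \<le> real n + 2^(j+1)" by simp
  then show ?thesis by (simp add: field_simps)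
qed

lemma geo: "(\<Sum>i<L. 2 * x / 2^i) = 4 * x - 4 * x / 2^L" for x :: real
  by (induction L) (simp_all add: field_simps)

lemma prog_len_eq:
  assumes L: "L \<ge> 1"
  shows "length (prog n k L W) = 1 + n div 2 + (\<Sum>i<L. 8 * (ng ^^ Suc i) (length (ps0 n)))
     + 2 * (RR n L W * W) + 3 * RR n L W + 3 * W + glen (L+3)"
     and "RR n L W = 2 * (ng ^^ L) (length (ps0 n)) div W + 1"
proof -
  have LL: "L = Suc (L - 1)" using L by simp
  have q: "length (qsL n L) = (ng ^^ (L-1)) (length (ps0 n))"
    by (simp add: qsL_def LE_def levelsE_qlen)
  have s: "(\<Sum>i<L. 8 * (ng ^^ Suc i) (length (ps0 n))) = (\<Sum>i<L-1. 8 * (ng ^^ Suc i) (length (ps0 n))) + 8 * ng ((ng ^^ (L-1)) (length (ps0 n)))"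
    by (subst LL) (simp add: funpow_swap1)
  show "length (prog n k L W) = 1 + n div 2 + (\<Sum>i<L. 8 * (ng ^^ Suc i) (length (ps0 n)))
     + 2 * (RR n L W * W) + 3 * RR n L W + 3 * W + glen (L+3)"
    unfolding prog_len[OF L] s
    by (simp add: m6_def m5_def m4_def m3_def m2_def m1_def q LE_def levelsE_plen)
  have "ng ((ng ^^ (L-1)) (length (ps0 n))) = (ng ^^ L) (length (ps0 n))"
    by (subst (2) LL) (simp add: funpow_swap1)
  then show "RR n L W = 2 * (ng ^^ L) (length (ps0 n)) div W + 1"
    by (simp add: RR_def ysL_def q)
qed

lemma lin: "(a::real) \<le> n2 \<Longrightarrow> X \<le> Y \<Longrightarrow> b \<le> M + W \<Longrightarrow> c = d + 1 \<Longrightarrow>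
  1 + a + X + 2*b + 3*c + 3*W + g \<le> 1 + n2 + Y + 2*(M+W) + 3*(d+1) + 3*W + g"
  by (smt (verit))

lemma fin_lin: "(M::real) \<le> q + 2 \<Longrightarrow> D \<le> s + 2 \<Longrightarrow> W \<le> s + 1 \<Longrightarrow>
  1 + n / 2 + (4 * n - 4 * q + 8 * L) + 2 * (M + W) + 3 * (D + 1) + 3 * W + g \<le> 4.5 * n - 2 * q + 8 * s + (8 * L + 20 + g)"
  by (simp add: algebra_simps; linarith)

lemma size_bound:
  assumes n: "n \<ge> 1" and L: "L \<ge> 1" and W: "W = nat \<lfloor>sqrt (real n)\<rfloor> + 1"
  shows "real (length (prog n k L W)) \<le> (4.5 - 2 / 2^L) * real n + 8 * sqrt (real n) + (8 * real L + 20 + real (glen (L+3)))"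
proof -
  define K0 where "K0 = length (ps0 n)"
  have K0b: "2 * K0 \<le> n + 1" unfolding K0_def ps0_len by presburger
  define KL where "KL = (ng ^^ L) K0"
  define M where "M = 2 * KL"
  define R where "R = RR n L W"
  have len: "length (prog n k L W) = 1 + n div 2 + (\<Sum>i<L. 8 * (ng ^^ Suc i) K0) + 2 * (R * W) + 3 * R + 3 * W + glen (L+3)"
    using prog_len_eq(1)[OF L] by (simp add: K0_def R_def)
  have Rd: "R = M div W + 1" using prog_len_eq(2)[OF L] by (simp add: R_def M_def KL_def K0_def)
  have sn: "sqrt (real n) \<ge> 1" using n by simp
  have Wgt: "real W > sqrt (real n)" unfolding W using floor_correct[of "sqrt (real n)"] by linarith
  have Wle: "real W \<le> sqrt (real n) + 1" unfolding W using floor_correct[of "sqrt (real n)"] sn by linarith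
  have W0: "W > 0" using W by simp
  have S1: "real (\<Sum>i<L. 8 * (ng ^^ Suc i) K0) \<le> 4 * real n - 4 * real n / 2^L + 8 * real L"
  proof -
    have "real (\<Sum>i<L. 8 * (ng ^^ Suc i) K0) = (\<Sum>i<L. 8 * real ((ng ^^ Suc i) K0))" by simp
    also have "\<dots> \<le> (\<Sum>i<L. 2 * real n / 2^i + 8)"
    proof (rule sum_mono)
      fix i assume "i \<in> {..<L}"
      have "real ((ng ^^ Suc i) K0) \<le> real n / 2^(Suc i + 1) + 1" by (rule K_bound_real[OF K0b])
      then show "8 * real ((ng ^^ Suc i) K0) \<le> 2 * real n / 2^i + 8" by (simp add: field_simps)
    qed
    also have "\<dots> = 4 * real n - 4 * real n / 2^L + 8 * real L" by (simp add: sum.distrib geo)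
    finally show ?thesis .
  qed
  have KLb: "real KL \<le> real n / 2^(L+1) + 1" unfolding KL_def by (rule K_bound_real[OF K0b])
  have Mb: "real M \<le> real n / 2^L + 2" using KLb by (simp add: M_def field_simps)
  have Mb2: "real M \<le> real n + 2"
  proof -
    have p: "(1::real) \<le> 2^L" by simp
    have "real n * 1 \<le> real n * 2^L" by (rule mult_left_mono[OF p]) simp
    then have "real n / 2^L \<le> real n" by (simp add: divide_le_eq)
    then show ?thesis using Mb by linarith
  qed
  have RW: "R * W \<le> M + W"
  proof -
    have "M div W * W \<le> M" by (rule div_times_less_eq_dividend)
    then show ?thesis by (simp add: Rd algebra_simps)
  qed
  have MdW: "real (M div W) \<le> sqrt (real n) + 2"
  proof -
    have "real (M div W) * real W \<le> real M" using div_times_less_eq_dividend[of M W] of_nat_le_iff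
      by (metis of_nat_mult)
    then have a: "real (M div W) \<le> real M / real W" using W0 by (simp add: field_simps)
    have "real M / real W \<le> real M / sqrt (real n)"
      using Wgt sn W0 by (intro divide_left_mono) (auto intro!: mult_pos_pos)
    also have "\<dots> \<le> (real n + 2) / sqrt (real n)" using Mb2 sn by (intro divide_right_mono) auto
    also have "\<dots> = sqrt (real n) + 2 / sqrt (real n)"
    proof -
      have "real n = sqrt (real n) * sqrt (real n)" by simp
      then show ?thesis using sn by (simp add: field_simps)
    qed
    also have "2 / sqrt (real n) \<le> 2" using sn by (simp add: divide_le_eq)
    finally show ?thesis using a by linarith
  qed
  have nd: "real (n div 2) \<le> real n / 2" by linarith
  have "real (length (prog n k L W)) = 1 + real (n div 2) + real (\<Sum>i<L. 8 * (ng ^^ Suc i) K0) + 2 * real (R * W) + 3 * real R + 3 * real W + real (glen (L+3))"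
    unfolding len by simp
  also have "\<dots> \<le> 1 + real n / 2 + (4 * real n - 4 * real n / 2^L + 8 * real L) + 2 * (real M + real W) + 3 * (real (M div W) + 1) + 3 * real W + real (glen (L+3))"
  proof -
    have RWr: "real (R*W) \<le> real M + real W" using RW by (metis of_nat_add of_nat_le_iff)
    have Rr: "real R = real (M div W) + 1" using Rd by simp
    define q where "q = 4 * real n / 2^L"
    define X where "X = real (\<Sum>i<L. 8 * (ng ^^ Suc i) K0)"
    have S1': "X \<le> 4 * real n - q + 8 * real L" using S1 by (simp only: X_def q_def)
    show ?thesis unfolding q_def[symmetric] X_def[symmetric] by (rule lin[OF nd S1' RWr Rr])
  qed
  also have "\<dots> \<le> (4.5 - 2 / 2^L) * real n + 8 * sqrt (real n) + (8 * real L + 20 + real (glen (L+3)))"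
  proof -
    define q where "q = real n / 2^L"
    have e1: "4 * real n / 2^L = 4 * q" "(4.5 - 2 / 2^L) * real n = 4.5 * real n - 2 * q" unfolding q_def by (simp_all add: field_simps)
    have Mq: "real M \<le> q + 2" using Mb unfolding q_def .
    show ?thesis unfolding e1 by (rule fin_lin[OF Mq MdW Wle])
  qed
  finally show ?thesis .
qed

lemma slp_le:
  assumes n: "n \<ge> 1" and L: "L \<ge> 1" and W: "W \<ge> 1" and k: "k \<le> 2^(L+1)"
  shows "slp_size n (THR n k) \<le> length (prog n k L W)"
proof -
  have "computes n (prog n k L W) (m6 n L W + glen (L+3) - 1) (THR n k)"
    unfolding computes_def
    using prog_wf[OF n W] prog_len[OF L] glen_pos[of "L+3"] prog_correct[OF n L W k] by auto
  then show ?thesis unfolding slp_size_def by (intro Least_le) blast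
qed

theorem theorem2:
  fixes k :: nat
  assumes "k \<ge> 4"
  shows "\<exists>g :: nat \<Rightarrow> real. g \<in> o(\<lambda>n. real n) \<and>
    (\<forall>\<^sub>F n in at_top. real (slp_size n (THR n k))
        \<le> (4.5 - 2 powr (2 - real_of_int \<lceil>log 2 (real k)\<rceil>)) * real n + g n)"
proof -
  define t where "t = \<lceil>log 2 (real k)\<rceil>"
  have k4: "real k \<ge> 4" using assms by simp
  have "log 2 (real k) \<ge> log 2 4" using k4 by simp
  moreover have "log 2 (4::real) = 2"
  proof -
    have "(4::real) = 2 powr 2" by simp
    then show ?thesis by (metis log_powr_cancel zero_less_numeral numeral_One one_less_numeral_iff semiring_norm(76) less_numeral_extra(4))
  qed
  ultimately have lg: "log 2 (real k) \<ge> 2" by simp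
  have t2: "t \<ge> 2" unfolding t_def using lg by (simp add: le_ceiling_iff)
  define L where "L = nat t - 1"
  have L1: "L \<ge> 1" using t2 by (simp add: L_def)
  have tL: "real_of_int t = real (L + 1)" using t2 by (simp add: L_def)
  have kb: "k \<le> 2^(L+1)"
  proof -
    have "log 2 (real k) \<le> real_of_int t" unfolding t_def by simp
    then have "real k \<le> 2 powr real_of_int t" using k4 by (subst (asm) log_le_iff) auto
    also have "\<dots> = 2^(L+1)" unfolding tL using powr_realpow[of 2 "L+1"] by simp
    finally have "real k \<le> real (2^(L+1))" by simp
    then show ?thesis by linarith
  qed
  have cst: "2 powr (2 - real_of_int \<lceil>log 2 (real k)\<rceil>) = 2 / 2^L"
  proof -
    have "2 powr (2 - real_of_int \<lceil>log 2 (real k)\<rceil>) = 2 powr (2 - real (L+1))" using tL t_def by simp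
    also have "\<dots> = 2 powr (1 - real L)" by simp
    also have "\<dots> = 2 powr 1 / 2 powr real L" by (rule powr_diff)
    also have "\<dots> = 2 / 2^L" by (simp add: powr_realpow)
    finally show ?thesis .
  qed
  define C where "C = 8 * real L + 20 + real (glen (L+3))"
  define g where "g = (\<lambda>n::nat. 8 * sqrt (real n) + C)"
  have go: "g \<in> o(\<lambda>n. real n)" unfolding g_def by real_asymp
  have ev: "\<forall>\<^sub>F n in at_top. real (slp_size n (THR n k))
        \<le> (4.5 - 2 powr (2 - real_of_int \<lceil>log 2 (real k)\<rceil>)) * real n + g n"
  proof (rule eventually_mono[OF eventually_ge_at_top[of "1::nat"]])
    fix n :: nat assume n: "1 \<le> n"
    define W where "W = nat \<lfloor>sqrt (real n)\<rfloor> + 1"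
    have "real (slp_size n (THR n k)) \<le> real (length (prog n k L W))"
      using slp_le[OF n L1 _ kb, of W] by (simp add: W_def)
    also have "\<dots> \<le> (4.5 - 2 / 2^L) * real n + 8 * sqrt (real n) + C"
      using size_bound[OF n L1 W_def] by (simp add: C_def)
    finally show "real (slp_size n (THR n k)) \<le> (4.5 - 2 powr (2 - real_of_int \<lceil>log 2 (real k)\<rceil>)) * real n + g n"
      unfolding cst g_def by simp
  qed
  show ?thesis using go ev by blast
qed

end
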